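(* Let $G$ be a connected graph with at least one edge. Then $B(G)$ diverges under the operator $KB_e$ if and only if $G$ is not a cycle, not a path and not $K_{1,3}$.
   Context: All graphs are finite, simple and undirected. A biclique of a graph $H$ is a maximal (with respect to inclusion) induced subgraph of $H$ that is a complete bipartite graph $K_{p,q}$ with $p,q\ge 1$; $KB_e(H)$ has one vertex per biclique of $H$, two distinct vertices adjacent iff the bicliques share an edge; if $H$ has no bicliques, $KB_e(H)$ is the empty graph. $KB_e^0(H)=H$, $KB_e^k(H)=KB_e(KB_e^{k-1}(H))$; $H$ diverges if $|V(KB_e^k(H))|\to\infty$. The burgeon graph $B(G)$ is obtained by replacing each vertex $v$ of $G$ by a clique $C_v$ on $d(v)$ vertices, whose vertices are in bijection with the neighbours of $v$; for each edge $uv$ of $G$, the vertex of $C_v$ corresponding to $u$ is joined to the vertex of $C_u$ corresponding to $v$; there are no other edges between different cliques. *)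

theory Defs
  imports Main "HOL-Library.Nat_Bijection"
begin

text \<open>Every finite graph is isomorphic to such a graph, and all notions below are
  invariant under isomorphism.\<close>

type_synonym ugraph = "nat set \<times> nat set set"

definition verts :: "ugraph \<Rightarrow> nat set" where "verts G = fst G"
definition edges :: "ugraph \<Rightarrow> nat set set" where "edges G = snd G"

definition wf_graph :: "ugraph \<Rightarrow> bool" where
  "wf_graph G \<longleftrightarrow> finite (verts G) \<and> (\<forall>e\<in>edges G. e \<subseteq> verts G \<and> card e = 2)"

definition adj :: "ugraph \<Rightarrow> nat \<Rightarrow> nat \<Rightarrow> bool" where
  "adj G u v \<longleftrightarrow> {u, v} \<in> edges G"

definition connected_graph :: "ugraph \<Rightarrow> bool" where
  "connected_graph G \<longleftrightarrow> (\<forall>u\<in>verts G. \<forall>v\<in>verts G. (adj G)\<^sup>*\<^sup>* u v)"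

definition induced_cbip :: "ugraph \<Rightarrow> nat set \<Rightarrow> bool" where
  "induced_cbip G S \<longleftrightarrow> S \<subseteq> verts G \<and>
     (\<exists>A B. A \<noteq> {} \<and> B \<noteq> {} \<and> A \<inter> B = {} \<and> A \<union> B = S \<and>
        (\<forall>a\<in>A. \<forall>b\<in>B. adj G a b) \<and>
        (\<forall>a\<in>A. \<forall>a'\<in>A. \<not> adj G a a') \<and>
        (\<forall>b\<in>B. \<forall>b'\<in>B. \<not> adj G b b'))"

text \<open>A biclique: an inclusion-maximal induced complete bipartite subgraph
  (an induced subgraph is determined by its vertex set).\<close>
definition biclique :: "ugraph \<Rightarrow> nat set \<Rightarrow> bool" where
  "biclique G S \<longleftrightarrow> induced_cbip G S \<and> (\<forall>T. induced_cbip G T \<and> S \<subseteq> T \<longrightarrow> T = S)"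

definition share_edge :: "ugraph \<Rightarrow> nat set \<Rightarrow> nat set \<Rightarrow> bool" where
  "share_edge G S T \<longleftrightarrow> (\<exists>u v. u \<in> S \<inter> T \<and> v \<in> S \<inter> T \<and> adj G u v)"

text \<open>Its vertex set is the set of bicliques,
  relabelled injectively into nat by set_encode (a bijection between finite
  sets of naturals and naturals).\<close>
definition KBe :: "ugraph \<Rightarrow> ugraph" where
  "KBe G = (set_encode ` {S. biclique G S},
            {{set_encode S, set_encode T} | S T.
               biclique G S \<and> biclique G T \<and> S \<noteq> T \<and> share_edge G S T})"

definition diverges :: "ugraph \<Rightarrow> bool" where
  "diverges H \<longleftrightarrow> filterlim (\<lambda>k. card (verts ((KBe ^^ k) H))) at_top sequentially"

text \<open>Burgeon graph B(G): vertex (v,u) (encoded by prod_encode) is the vertex of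
  the clique C_v corresponding to the neighbour u of v.\<close>
definition burgeon :: "ugraph \<Rightarrow> ugraph" where
  "burgeon G =
    ({prod_encode (v, u) | v u. v \<in> verts G \<and> adj G v u},
     {{prod_encode (v, u), prod_encode (v, w)} | v u w.
         v \<in> verts G \<and> adj G v u \<and> adj G v w \<and> u \<noteq> w}
     \<union> {{prod_encode (v, u), prod_encode (u, v)} | v u. v \<in> verts G \<and> adj G v u})"

definition is_path_graph :: "ugraph \<Rightarrow> bool" where
  "is_path_graph G \<longleftrightarrow> (\<exists>xs. distinct xs \<and> xs \<noteq> [] \<and> verts G = set xs \<and>
      edges G = {{xs ! i, xs ! (i + 1)} | i. i + 1 < length xs})"

definition is_cycle_graph :: "ugraph \<Rightarrow> bool" where
  "is_cycle_graph G \<longleftrightarrow> (\<exists>xs. distinct xs \<and> length xs \<ge> 3 \<and> verts G = set xs \<and>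
      edges G = {{xs ! i, xs ! ((i + 1) mod length xs)} | i. i < length xs})"

definition is_K13 :: "ugraph \<Rightarrow> bool" where
  "is_K13 G \<longleftrightarrow> (\<exists>c a b d. distinct [c, a, b, d] \<and> verts G = {c, a, b, d} \<and>
      edges G = {{c, a}, {c, b}, {c, d}})"

end

theory Submission
  imports Defs
begin


lemma adj_sym: "adj G u v = adj G v u"
  by (simp add: adj_def insert_commute)

lemma wf_adjD:
  assumes "wf_graph G" "adj G u v"
  shows "u \<noteq> v" "u \<in> verts G" "v \<in> verts G"
proof -
  have "{u,v} \<subseteq> verts G" "card {u,v} = 2" using assms unfolding wf_graph_def adj_def by auto
  thus "u \<noteq> v" "u \<in> verts G" "v \<in> verts G" by auto
qed

lemma wf_finite: "wf_graph G \<Longrightarrow> finite (verts G)"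
  by (simp add: wf_graph_def)

definition isomap :: "(nat \<Rightarrow> nat) \<Rightarrow> ugraph \<Rightarrow> ugraph \<Rightarrow> bool" where
  "isomap f H H' \<longleftrightarrow> bij_betw f (verts H) (verts H') \<and>
     (\<forall>x\<in>verts H. \<forall>y\<in>verts H. adj H' (f x) (f y) = adj H x y)"

definition giso :: "ugraph \<Rightarrow> ugraph \<Rightarrow> bool" where
  "giso H H' \<longleftrightarrow> (\<exists>f. isomap f H H')"

lemma isomap_inv:
  assumes "isomap f H H'"
  shows "isomap (inv_into (verts H) f) H' H"
proof -
  have b: "bij_betw f (verts H) (verts H')" using assms by (simp add: isomap_def)
  have b2: "bij_betw (inv_into (verts H) f) (verts H') (verts H)"
    using b by (simp add: bij_betw_inv_into)
  show ?thesis unfolding isomap_def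
  proof (intro conjI b2 ballI)
    fix x y assume x: "x \<in> verts H'" and y: "y \<in> verts H'"
    let ?g = "inv_into (verts H) f"
    have gx: "?g x \<in> verts H" "f (?g x) = x" using b2 b x
      by (auto simp: bij_betw_def f_inv_into_f)
    have gy: "?g y \<in> verts H" "f (?g y) = y" using b2 b y
      by (auto simp: bij_betw_def f_inv_into_f)
    show "adj H (?g x) (?g y) = adj H' x y"
      using assms gx gy unfolding isomap_def by metis
  qed
qed

lemma iso_sym: "giso H H' \<Longrightarrow> giso H' H"
  using isomap_inv giso_def by blast

lemma iso_refl: "giso H H"
  unfolding giso_def isomap_def by (rule exI[of _ id]) auto

lemma iso_trans:
  assumes "giso H1 H2" "giso H2 H3" shows "giso H1 H3"
proof -
  obtain f g where f: "isomap f H1 H2" and g: "isomap g H2 H3"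
    using assms giso_def by blast
  have "isomap (g \<circ> f) H1 H3"
    unfolding isomap_def
  proof (intro conjI ballI)
    show "bij_betw (g \<circ> f) (verts H1) (verts H3)"
      using f g bij_betw_trans isomap_def by blast
    fix x y assume "x \<in> verts H1" "y \<in> verts H1"
    moreover have "f x \<in> verts H2" "f y \<in> verts H2"
      using f calculation unfolding isomap_def bij_betw_def by auto
    ultimately show "adj H3 ((g \<circ> f) x) ((g \<circ> f) y) = adj H1 x y"
      using f g unfolding isomap_def by simp
  qed
  thus ?thesis using giso_def by blast
qed

lemma iso_card: "giso H H' \<Longrightarrow> card (verts H) = card (verts H')"
  unfolding giso_def isomap_def using bij_betw_same_card by blast

lemma iso_param:
  assumes "verts H = \<alpha> ` T" "verts H' = \<beta> ` T" "inj_on \<alpha> T" "inj_on \<beta> T"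
    "\<And>t t'. t \<in> T \<Longrightarrow> t' \<in> T \<Longrightarrow> adj H' (\<beta> t) (\<beta> t') = adj H (\<alpha> t) (\<alpha> t')"
  shows "giso H H'"
proof -
  let ?f = "\<beta> \<circ> inv_into T \<alpha>"
  have "bij_betw (inv_into T \<alpha>) (\<alpha> ` T) T"
    using assms(3) by (simp add: bij_betw_inv_into inj_on_imp_bij_betw)
  moreover have "bij_betw \<beta> T (\<beta> ` T)" using assms(4) by (simp add: inj_on_imp_bij_betw)
  ultimately have "bij_betw ?f (verts H) (verts H')"
    using assms(1,2) bij_betw_trans by metis
  moreover have "\<forall>x\<in>verts H. \<forall>y\<in>verts H. adj H' (?f x) (?f y) = adj H x y"
  proof (intro ballI)
    fix x y assume "x \<in> verts H" "y \<in> verts H"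
    then obtain t t' where "t \<in> T" "t' \<in> T" "x = \<alpha> t" "y = \<alpha> t'" using assms(1) by auto
    thus "adj H' (?f x) (?f y) = adj H x y" using assms(3,5) by simp
  qed
  ultimately show ?thesis unfolding giso_def isomap_def by blast
qed

lemma biclique_sub: "biclique G S \<Longrightarrow> S \<subseteq> verts G"
  by (simp add: biclique_def induced_cbip_def)

lemma biclique_finite: "wf_graph G \<Longrightarrow> biclique G S \<Longrightarrow> finite S"
  using biclique_sub wf_finite finite_subset by blast

lemma verts_KBe: "verts (KBe G) = set_encode ` {S. biclique G S}"
  by (simp add: KBe_def verts_def)

lemma share_edge_sym: "share_edge G S T = share_edge G T S"
  unfolding share_edge_def by blast

lemma adj_KBe:
  assumes "wf_graph G" "biclique G S" "biclique G T"
  shows "adj (KBe G) (set_encode S) (set_encode T) \<longleftrightarrow> S \<noteq> T \<and> share_edge G S T"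
proof
  assume "adj (KBe G) (set_encode S) (set_encode T)"
  then obtain S' T' where st: "{set_encode S, set_encode T} = {set_encode S', set_encode T'}"
    "biclique G S'" "biclique G T'" "S' \<noteq> T'" "share_edge G S' T'"
    unfolding adj_def KBe_def edges_def by auto
  have fin: "finite S" "finite T" "finite S'" "finite T'" using st assms biclique_finite by blast+
  from st(1) have "(set_encode S = set_encode S' \<and> set_encode T = set_encode T') \<or>
      (set_encode S = set_encode T' \<and> set_encode T = set_encode S')"
    by (auto simp: doubleton_eq_iff)
  hence "(S = S' \<and> T = T') \<or> (S = T' \<and> T = S')" using fin set_encode_eq by metis
  thus "S \<noteq> T \<and> share_edge G S T" using st share_edge_sym by metis
next
  assume "S \<noteq> T \<and> share_edge G S T"
  thus "adj (KBe G) (set_encode S) (set_encode T)"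
    using assms unfolding adj_def KBe_def edges_def by auto
qed

lemma finite_bicliques: "wf_graph G \<Longrightarrow> finite {S. biclique G S}"
proof -
  assume wf: "wf_graph G"
  have "{S. biclique G S} \<subseteq> Pow (verts G)" using biclique_sub by blast
  thus ?thesis using wf wf_finite finite_Pow_iff finite_subset by metis
qed

lemma wf_KBe: "wf_graph G \<Longrightarrow> wf_graph (KBe G)"
proof -
  assume wf: "wf_graph G"
  have "\<forall>e\<in>edges (KBe G). e \<subseteq> verts (KBe G) \<and> card e = 2"
  proof
    fix e assume "e \<in> edges (KBe G)"
    then obtain S T where st: "e = {set_encode S, set_encode T}" "biclique G S" "biclique G T" "S \<noteq> T"
      unfolding KBe_def edges_def by auto
    have ne: "set_encode S \<noteq> set_encode T"
      using st wf biclique_finite set_encode_eq by metis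
    have "e \<subseteq> verts (KBe G)" using st by (simp add: verts_KBe)
    moreover have "card e = 2" using st(1) ne by simp
    ultimately show "e \<subseteq> verts (KBe G) \<and> card e = 2" by blast
  qed
  thus ?thesis unfolding wf_graph_def using finite_bicliques[OF wf] by (simp add: verts_KBe)
qed



lemma cbip_image:
  assumes f: "isomap f H H'" and c: "induced_cbip H S"
  shows "induced_cbip H' (f ` S)"
proof -
  have b: "bij_betw f (verts H) (verts H')" and ad: "\<And>x y. x \<in> verts H \<Longrightarrow> y \<in> verts H \<Longrightarrow> adj H' (f x) (f y) = adj H x y"
    using f unfolding isomap_def by blast+
  have inj: "inj_on f (verts H)" using b by (simp add: bij_betw_def)
  obtain A B where AB: "S \<subseteq> verts H" "A \<noteq> {}" "B \<noteq> {}" "A \<inter> B = {}" "A \<union> B = S"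
    "\<forall>a\<in>A. \<forall>b\<in>B. adj H a b" "\<forall>a\<in>A. \<forall>a'\<in>A. \<not> adj H a a'" "\<forall>b\<in>B. \<forall>b'\<in>B. \<not> adj H b b'"
    using c unfolding induced_cbip_def by blast
  have sub: "A \<subseteq> verts H" "B \<subseteq> verts H" using AB by auto
  have "f ` A \<inter> f ` B = f ` (A \<inter> B)" using inj_on_image_Int[OF inj sub, symmetric] .
  hence i1: "f ` A \<inter> f ` B = {}" using AB(4) by simp
  have fv: "f ` verts H = verts H'" using b by (simp add: bij_betw_def)
  have i2: "f ` S \<subseteq> verts H'" using AB(1) fv by blast
  have i3: "\<forall>a\<in>f`A. \<forall>b\<in>f`B. adj H' a b"
  proof (intro ballI)
    fix a b assume "a \<in> f ` A" "b \<in> f ` B"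
    then obtain x y where "x \<in> A" "y \<in> B" "a = f x" "b = f y" by blast
    thus "adj H' a b" using AB(6) sub ad[of x y] by auto
  qed
  have i4: "\<forall>a\<in>f`A. \<forall>a'\<in>f`A. \<not> adj H' a a'"
  proof (intro ballI)
    fix a b assume "a \<in> f ` A" "b \<in> f ` A"
    then obtain x y where "x \<in> A" "y \<in> A" "a = f x" "b = f y" by blast
    thus "\<not> adj H' a b" using AB(7) sub ad[of x y] by auto
  qed
  have i5: "\<forall>a\<in>f`B. \<forall>a'\<in>f`B. \<not> adj H' a a'"
  proof (intro ballI)
    fix a b assume "a \<in> f ` B" "b \<in> f ` B"
    then obtain x y where "x \<in> B" "y \<in> B" "a = f x" "b = f y" by blast
    thus "\<not> adj H' a b" using AB(8) sub ad[of x y] by auto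
  qed
  have i6: "f ` A \<noteq> {}" "f ` B \<noteq> {}" "f ` A \<union> f ` B = f ` S" using AB(2,3,5) by auto
  show ?thesis unfolding induced_cbip_def
    apply (rule conjI[OF i2])
    apply (rule exI[of _ "f ` A"], rule exI[of _ "f ` B"])
    using i1 i3 i4 i5 i6 by blast
qed

lemma cbip_sub: "induced_cbip G S \<Longrightarrow> S \<subseteq> verts G"
  by (simp add: induced_cbip_def)

lemma bicliqueD: "biclique G S \<Longrightarrow> induced_cbip G T \<Longrightarrow> S \<subseteq> T \<Longrightarrow> T = S"
  by (simp add: biclique_def)

lemma bicliqueI: "induced_cbip G S \<Longrightarrow> (\<And>T. induced_cbip G T \<Longrightarrow> S \<subseteq> T \<Longrightarrow> T = S) \<Longrightarrow> biclique G S"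
  by (simp add: biclique_def)

lemma biclique_cbip: "biclique G S \<Longrightarrow> induced_cbip G S"
  by (simp add: biclique_def)

lemma biclique_image:
  assumes f: "isomap f H H'" and c: "biclique H S"
  shows "biclique H' (f ` S)"
proof -
  let ?g = "inv_into (verts H) f"
  have g: "isomap ?g H' H" using isomap_inv f by blast
  have b: "bij_betw f (verts H) (verts H')" using f by (simp add: isomap_def)
  have Ssub: "S \<subseteq> verts H" using c biclique_sub by blast
  have c1: "induced_cbip H' (f ` S)" using cbip_image[OF f biclique_cbip[OF c]] .
  show ?thesis
  proof (rule bicliqueI[OF c1])
    fix T assume T1: "induced_cbip H' T" and T2: "f ` S \<subseteq> T"
    have Tsub: "T \<subseteq> verts H'" using cbip_sub[OF T1] .
    have gi: "induced_cbip H (?g ` T)" using cbip_image[OF g T1] .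
    have "?g ` (f ` S) = S" using Ssub b
      by (simp add: bij_betw_def inv_into_image_cancel)
    hence "S \<subseteq> ?g ` T" using T2 by blast
    hence "?g ` T = S" using bicliqueD[OF c gi] by simp
    hence "f ` ?g ` T = f ` S" by simp
    moreover have "f ` ?g ` T = T" using Tsub b
      by (simp add: bij_betw_def image_inv_into_cancel)
    ultimately show "T = f ` S" by simp
  qed
qed

lemma KBe_iso:
  assumes wf: "wf_graph H" "wf_graph H'" and i: "giso H H'"
  shows "giso (KBe H) (KBe H')"
proof -
  obtain f where f: "isomap f H H'" using i giso_def by blast
  let ?g = "inv_into (verts H) f"
  have g: "isomap ?g H' H" using isomap_inv f by blast
  have b: "bij_betw f (verts H) (verts H')" using f by (simp add: isomap_def)
  have inj: "inj_on f (verts H)" using b by (simp add: bij_betw_def)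
  have ad: "\<And>x y. x \<in> verts H \<Longrightarrow> y \<in> verts H \<Longrightarrow> adj H' (f x) (f y) = adj H x y"
    using f by (auto simp: isomap_def)
  let ?T = "{S. biclique H S}"
  show ?thesis
  proof (rule iso_param[where T = ?T and \<alpha> = set_encode and \<beta> = "\<lambda>S. set_encode (f ` S)"])
    show "verts (KBe H) = set_encode ` ?T" by (simp add: verts_KBe)
    have "{S. biclique H' S} = (`) f ` ?T"
    proof
      show "(`) f ` ?T \<subseteq> {S. biclique H' S}" using biclique_image f by blast
      show "{S. biclique H' S} \<subseteq> (`) f ` ?T"
      proof
        fix S' assume S': "S' \<in> {S. biclique H' S}"
        hence m: "?g ` S' \<in> ?T" using biclique_image g by blast
        have "S' \<subseteq> verts H'" using S' biclique_sub by blast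
        hence e: "f ` (?g ` S') = S'" using b
          by (simp add: bij_betw_def image_inv_into_cancel)
        show "S' \<in> (`) f ` ?T" using image_eqI[of S' "(`) f" "?g ` S'" ?T] e m by simp
      qed
    qed
    thus "verts (KBe H') = (\<lambda>S. set_encode (f ` S)) ` ?T" by (simp add: verts_KBe image_image)
    show "inj_on set_encode ?T"
    proof (rule inj_onI)
      fix S S' assume "S \<in> ?T" "S' \<in> ?T" "set_encode S = set_encode S'"
      moreover have "finite S" "finite S'" using calculation biclique_finite wf(1) by auto
      ultimately show "S = S'" using set_encode_eq by auto
    qed
    show "inj_on (\<lambda>S. set_encode (f ` S)) ?T"
    proof (rule inj_onI)
      fix S S' assume "S \<in> ?T" "S' \<in> ?T" "set_encode (f ` S) = set_encode (f ` S')"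
      moreover have "finite S" "finite S'" using calculation biclique_finite wf(1) by auto
      ultimately have "f ` S = f ` S'" using set_encode_eq by auto
      thus "S = S'" using inj \<open>S \<in> ?T\<close> \<open>S' \<in> ?T\<close> biclique_sub
        by (metis inj_on_image_eq_iff mem_Collect_eq)
    qed
    fix S T assume S: "S \<in> ?T" and T: "T \<in> ?T"
    have bS: "biclique H' (f ` S)" "biclique H' (f ` T)" using S T biclique_image f by auto
    have sub: "S \<subseteq> verts H" "T \<subseteq> verts H" using S T biclique_sub by auto
    have eq: "(f ` S = f ` T) = (S = T)" using inj sub inj_on_image_eq_iff by metis
    have sh: "share_edge H' (f ` S) (f ` T) = share_edge H S T"
    proof
      assume "share_edge H' (f ` S) (f ` T)"
      then obtain u v where uv: "u \<in> f ` S \<inter> f ` T" "v \<in> f ` S \<inter> f ` T" "adj H' u v"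
        unfolding share_edge_def by blast
      have "f ` S \<inter> f ` T = f ` (S \<inter> T)" using inj_on_image_Int[OF inj sub, symmetric] .
      then obtain x y where xy: "x \<in> S \<inter> T" "y \<in> S \<inter> T" "u = f x" "v = f y" using uv by auto
      hence "adj H x y" using uv(3) ad[of x y] sub by auto
      thus "share_edge H S T" using xy unfolding share_edge_def by blast
    next
      assume "share_edge H S T"
      then obtain x y where xy: "x \<in> S \<inter> T" "y \<in> S \<inter> T" "adj H x y" unfolding share_edge_def by blast
      have "adj H' (f x) (f y)" using xy ad[of x y] sub by auto
      moreover have "f x \<in> f ` S \<inter> f ` T" "f y \<in> f ` S \<inter> f ` T" using xy by auto
      ultimately show "share_edge H' (f ` S) (f ` T)" unfolding share_edge_def by blast
    qed
    show "adj (KBe H') (set_encode (f ` S)) (set_encode (f ` T)) = adj (KBe H) (set_encode S) (set_encode T)"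
      using adj_KBe[OF wf(2) bS] adj_KBe[OF wf(1), of S T] S T eq sh by simp
  qed
qed



definition Rb :: "nat \<times> nat \<Rightarrow> nat \<times> nat \<Rightarrow> bool" where
  "Rb d d' \<longleftrightarrow> (fst d = fst d' \<and> snd d \<noteq> snd d') \<or> (fst d' = snd d \<and> snd d' = fst d)"

definition darts :: "ugraph \<Rightarrow> (nat \<times> nat) set" where
  "darts G = {(v,u). adj G v u}"

definition noisol :: "ugraph \<Rightarrow> bool" where
  "noisol G \<longleftrightarrow> (\<forall>v u. adj G v u \<longrightarrow> (\<exists>w. w \<noteq> u \<and> adj G v w) \<or> (\<exists>w. w \<noteq> v \<and> adj G u w))"

definition lg :: "ugraph \<Rightarrow> ugraph" where
  "lg G = (set_encode ` edges G,
     {{set_encode e, set_encode f} | e f. e \<in> edges G \<and> f \<in> edges G \<and> e \<noteq> f \<and> e \<inter> f \<noteq> {}})"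

lemma darts_sub: "wf_graph G \<Longrightarrow> darts G \<subseteq> verts G \<times> verts G"
  unfolding darts_def using wf_adjD by blast

lemma finite_darts: "wf_graph G \<Longrightarrow> finite (darts G)"
  using darts_sub wf_finite finite_subset by (metis finite_SigmaI)

lemma verts_burgeon: "wf_graph G \<Longrightarrow> verts (burgeon G) = prod_encode ` darts G"
  unfolding burgeon_def verts_def darts_def using wf_adjD[of G] by (auto simp: verts_def)

lemma edges_burgeon: "edges (burgeon G) =
    {{prod_encode (v, u), prod_encode (v, w)} | v u w.
         v \<in> verts G \<and> adj G v u \<and> adj G v w \<and> u \<noteq> w}
     \<union> {{prod_encode (v, u), prod_encode (u, v)} | v u. v \<in> verts G \<and> adj G v u}"
  by (simp add: burgeon_def edges_def)

lemma pe_eq: "prod_encode x = prod_encode y \<longleftrightarrow> x = y"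
  by (rule prod_encode_eq)

lemma adj_burgeon:
  assumes wf: "wf_graph G" and d: "adj G v u" "adj G v' u'"
  shows "adj (burgeon G) (prod_encode (v,u)) (prod_encode (v',u')) \<longleftrightarrow> Rb (v,u) (v',u')"
proof
  assume "adj (burgeon G) (prod_encode (v,u)) (prod_encode (v',u'))"
  hence "{prod_encode (v,u), prod_encode (v',u')} \<in> edges (burgeon G)" by (simp add: adj_def)
  then consider (a) a b c where "{prod_encode (v,u), prod_encode (v',u')} = {prod_encode (a, b), prod_encode (a, c)}" "b \<noteq> c"
    | (b) a b where "{prod_encode (v,u), prod_encode (v',u')} = {prod_encode (a, b), prod_encode (b, a)}"
    unfolding edges_burgeon by blast
  thus "Rb (v,u) (v',u')"
  proof cases
    case a
    thus ?thesis unfolding Rb_def by (auto simp: doubleton_eq_iff pe_eq)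
  next
    case b
    thus ?thesis unfolding Rb_def by (auto simp: doubleton_eq_iff pe_eq)
  qed
next
  assume "Rb (v,u) (v',u')"
  hence "(v = v' \<and> u \<noteq> u') \<or> (v' = u \<and> u' = v)" by (simp add: Rb_def)
  moreover have "v \<in> verts G" using wf d wf_adjD by blast
  ultimately have "{prod_encode (v,u), prod_encode (v',u')} \<in> edges (burgeon G)"
    unfolding edges_burgeon using d by blast
  thus "adj (burgeon G) (prod_encode (v,u)) (prod_encode (v',u'))" by (simp add: adj_def)
qed

lemma wf_burgeon: "wf_graph G \<Longrightarrow> wf_graph (burgeon G)"
proof -
  assume wf: "wf_graph G"
  have "finite (verts (burgeon G))" using verts_burgeon[OF wf] finite_darts[OF wf] by simp
  moreover have "\<forall>e\<in>edges (burgeon G). e \<subseteq> verts (burgeon G) \<and> card e = 2"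
  proof
    fix e assume "e \<in> edges (burgeon G)"
    then consider (a) v u w where "e = {prod_encode (v, u), prod_encode (v, w)}" "adj G v u" "adj G v w" "u \<noteq> w"
      | (b) v u where "e = {prod_encode (v, u), prod_encode (u, v)}" "adj G v u"
      unfolding edges_burgeon by blast
    thus "e \<subseteq> verts (burgeon G) \<and> card e = 2"
    proof cases
      case a thus ?thesis using verts_burgeon[OF wf] by (auto simp: darts_def pe_eq)
    next
      case b
      have "u \<noteq> v" using wf b(2) wf_adjD by blast
      moreover have "adj G u v" using b(2) adj_sym by metis
      ultimately show ?thesis using b verts_burgeon[OF wf] by (auto simp: darts_def pe_eq)
    qed
  qed
  ultimately show ?thesis by (simp add: wf_graph_def)
qed



definition Pt :: "nat \<Rightarrow> nat \<Rightarrow> nat \<Rightarrow> nat set" where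
  "Pt v u w = {prod_encode (u,v), prod_encode (v,u), prod_encode (v,w)}"

definition Trip :: "ugraph \<Rightarrow> (nat \<times> nat \<times> nat) set" where
  "Trip G = {(v,u,w). adj G v u \<and> adj G v w \<and> u \<noteq> w}"

lemma vert_burgeonE:
  assumes "wf_graph G" "x \<in> verts (burgeon G)"
  obtains v u where "x = prod_encode (v,u)" "adj G v u"
  using assms verts_burgeon[OF assms(1)] unfolding darts_def by auto

lemma two_two:
  assumes wf: "wf_graph G" and v: "a \<in> verts (burgeon G)" "a' \<in> verts (burgeon G)"
    "b \<in> verts (burgeon G)" "b' \<in> verts (burgeon G)"
    and ne: "a \<noteq> a'" "b \<noteq> b'"
    and ad: "adj (burgeon G) a b" "adj (burgeon G) a b'" "adj (burgeon G) a' b" "adj (burgeon G) a' b'"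
    "\<not> adj (burgeon G) a a'"
  shows False
proof -
  obtain a1 a2 where a: "a = prod_encode (a1,a2)" "adj G a1 a2" using vert_burgeonE[OF wf v(1)] by blast
  obtain a3 a4 where a': "a' = prod_encode (a3,a4)" "adj G a3 a4" using vert_burgeonE[OF wf v(2)] by blast
  obtain b1 b2 where b: "b = prod_encode (b1,b2)" "adj G b1 b2" using vert_burgeonE[OF wf v(3)] by blast
  obtain b3 b4 where b': "b' = prod_encode (b3,b4)" "adj G b3 b4" using vert_burgeonE[OF wf v(4)] by blast
  have r: "Rb (a1,a2) (b1,b2)" "Rb (a1,a2) (b3,b4)" "Rb (a3,a4) (b1,b2)" "Rb (a3,a4) (b3,b4)"
    "\<not> Rb (a1,a2) (a3,a4)"
    using ad a a' b b' adj_burgeon[OF wf] by auto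
  have n: "(a1,a2) \<noteq> (a3,a4)" "(b1,b2) \<noteq> (b3,b4)" using ne a a' b b' by auto
  have d: "a1 \<noteq> a2" "a3 \<noteq> a4" "b1 \<noteq> b2" "b3 \<noteq> b4" using a a' b b' wf_adjD[OF wf] by auto
  show False using r n d unfolding Rb_def by auto
qed

lemma other_nbr:
  assumes wf: "wf_graph G" and n: "noisol G" and a: "adj G v u"
  shows "\<exists>t\<in>Trip G. {prod_encode (v,u), prod_encode (u,v)} \<subseteq> Pt (fst t) (fst (snd t)) (snd (snd t))"
proof -
  from n a consider (x) w where "w \<noteq> u" "adj G v w" | (y) w where "w \<noteq> v" "adj G u w"
    unfolding noisol_def by blast
  thus ?thesis
  proof cases
    case x
    hence "(v,u,w) \<in> Trip G" using a by (simp add: Trip_def)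
    thus ?thesis unfolding Pt_def by force
  next
    case y
    have "adj G u v" using a adj_sym by metis
    hence "(u,v,w) \<in> Trip G" using y by (simp add: Trip_def)
    thus ?thesis unfolding Pt_def by force
  qed
qed

lemma star_sub:
  assumes wf: "wf_graph G" and n: "noisol G" and y: "y \<in> verts (burgeon G)"
    and B: "B \<subseteq> verts (burgeon G)" "\<forall>b\<in>B. adj (burgeon G) y b"
    "\<forall>b\<in>B. \<forall>b'\<in>B. \<not> adj (burgeon G) b b'"
  shows "\<exists>t\<in>Trip G. insert y B \<subseteq> Pt (fst t) (fst (snd t)) (snd (snd t))"
proof -
  obtain v u where yv: "y = prod_encode (v,u)" "adj G v u" using vert_burgeonE[OF wf y] by blast
  have bform: "\<exists>w. adj G v w \<and> w \<noteq> u \<and> b = prod_encode (v,w) \<or> b = prod_encode (u,v)" if bB: "b \<in> B" for b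
  proof -
    obtain b1 b2 where bb: "b = prod_encode (b1,b2)" "adj G b1 b2" using vert_burgeonE[OF wf, of b] B(1) bB by blast
    have "Rb (v,u) (b1,b2)" using B(2) bB bb yv adj_burgeon[OF wf] by auto
    thus ?thesis using bb unfolding Rb_def by auto
  qed
  show ?thesis
  proof (cases "\<exists>w b. b \<in> B \<and> adj G v w \<and> w \<noteq> u \<and> b = prod_encode (v,w)")
    case True
    then obtain w b where wb: "b \<in> B" "adj G v w" "w \<noteq> u" "b = prod_encode (v,w)" by blast
    have "B \<subseteq> {prod_encode (u,v), prod_encode (v,w)}"
    proof
      fix b' assume b': "b' \<in> B"
      show "b' \<in> {prod_encode (u,v), prod_encode (v,w)}"
      proof (cases "b' = prod_encode (u,v)")
        case False
        then obtain w' where w': "adj G v w'" "w' \<noteq> u" "b' = prod_encode (v,w')" using bform b' by blast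
        have "\<not> adj (burgeon G) b b'" using B(3) wb(1) b' by blast
        hence "\<not> Rb (v,w) (v,w')" using adj_burgeon[OF wf wb(2) w'(1)] wb w' by simp
        hence "w' = w" unfolding Rb_def by simp
        thus ?thesis using w' by simp
      qed simp
    qed
    moreover have "(v,u,w) \<in> Trip G" using yv wb by (simp add: Trip_def)
    ultimately show ?thesis using yv unfolding Pt_def by force
  next
    case False
    hence "B \<subseteq> {prod_encode (u,v)}" using bform by blast
    moreover obtain t where "t \<in> Trip G" "{prod_encode (v,u), prod_encode (u,v)} \<subseteq> Pt (fst t) (fst (snd t)) (snd (snd t))"
      using other_nbr[OF wf n yv(2)] by blast
    ultimately show ?thesis using yv by blast
  qed
qed

lemma cbip_sub_Pt:
  assumes wf: "wf_graph G" and n: "noisol G" and c: "induced_cbip (burgeon G) S"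
  shows "\<exists>t\<in>Trip G. S \<subseteq> Pt (fst t) (fst (snd t)) (snd (snd t))"
proof -
  obtain A B where AB: "S \<subseteq> verts (burgeon G)" "A \<noteq> {}" "B \<noteq> {}" "A \<inter> B = {}" "A \<union> B = S"
    "\<forall>a\<in>A. \<forall>b\<in>B. adj (burgeon G) a b" "\<forall>a\<in>A. \<forall>a'\<in>A. \<not> adj (burgeon G) a a'"
    "\<forall>b\<in>B. \<forall>b'\<in>B. \<not> adj (burgeon G) b b'"
    using c unfolding induced_cbip_def by blast
  have "\<not> ((\<exists>a\<in>A. \<exists>a'\<in>A. a \<noteq> a') \<and> (\<exists>b\<in>B. \<exists>b'\<in>B. b \<noteq> b'))"
  proof
    assume "(\<exists>a\<in>A. \<exists>a'\<in>A. a \<noteq> a') \<and> (\<exists>b\<in>B. \<exists>b'\<in>B. b \<noteq> b')"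
    then obtain a a' b b' where "a \<in> A" "a' \<in> A" "a \<noteq> a'" "b \<in> B" "b' \<in> B" "b \<noteq> b'" by blast
    moreover have "a \<in> verts (burgeon G)" "a' \<in> verts (burgeon G)" "b \<in> verts (burgeon G)" "b' \<in> verts (burgeon G)"
      using calculation AB(1,5) by auto
    ultimately show False using two_two[OF wf] AB(6,7) by metis
  qed
  hence "(\<exists>y. A = {y}) \<or> (\<exists>y. B = {y})" using AB(2,3) by blast
  thus ?thesis
  proof
    assume "\<exists>y. A = {y}"
    then obtain y where y: "A = {y}" by blast
    have "S = insert y B" using y AB(5) by blast
    moreover have "y \<in> verts (burgeon G)" "B \<subseteq> verts (burgeon G)" using y AB(1,5) by auto
    ultimately show ?thesis using star_sub[OF wf n, of y B] AB(6,8) y by auto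
  next
    assume "\<exists>y. B = {y}"
    then obtain y where y: "B = {y}" by blast
    have "S = insert y A" using y AB(5) by blast
    moreover have "y \<in> verts (burgeon G)" "A \<subseteq> verts (burgeon G)" using y AB(1,5) by auto
    moreover have "\<forall>a\<in>A. adj (burgeon G) y a" using AB(6) y adj_sym by (metis singletonI)
    ultimately show ?thesis using star_sub[OF wf n, of y A] AB(7) by auto
  qed
qed



lemma comb_inj:
  fixes u v w u' v' w' :: nat
  assumes "u \<noteq> v" "v \<noteq> w" "u \<noteq> w" "u' \<noteq> v'" "v' \<noteq> w'" "u' \<noteq> w'"
    "{(u,v),(v,u),(v,w)} = {(u',v'),(v',u'),(v',w')}"
  shows "v = v' \<and> u = u' \<and> w = w'"
proof -
  have "(v,u) \<in> {(u',v'),(v',u'),(v',w')}" "(v,w) \<in> {(u',v'),(v',u'),(v',w')}"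
       "(u,v) \<in> {(u',v'),(v',u'),(v',w')}" using assms(7) by blast+
  thus ?thesis using assms(1-6) by auto
qed

lemma comb_share_fwd:
  fixes u v w u' v' w' :: nat
  assumes d: "u \<noteq> v" "v \<noteq> w" "u \<noteq> w" "u' \<noteq> v'" "v' \<noteq> w'" "u' \<noteq> w'"
    and ne: "(v,u,w) \<noteq> (v',u',w')"
    and dd: "d \<in> {(u,v),(v,u),(v,w)}" "d' \<in> {(u,v),(v,u),(v,w)}"
      "d \<in> {(u',v'),(v',u'),(v',w')}" "d' \<in> {(u',v'),(v',u'),(v',w')}" "Rb d d'"
  shows "({u,v} = {u',v'} \<and> {v,w} \<noteq> {v',w'}) \<or> ({u',v'} = {v,w} \<and> {v',w'} = {u,v})"
proof -
  have c: "(d=(u,v) \<and> d'=(v,u)) \<or> (d=(v,u) \<and> d'=(u,v)) \<or> (d=(v,u) \<and> d'=(v,w)) \<or> (d=(v,w) \<and> d'=(v,u))"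
    using dd(1,2,5) d unfolding Rb_def insert_iff empty_iff by (elim disjE) auto
  show ?thesis
  proof (cases "(d=(u,v) \<and> d'=(v,u)) \<or> (d=(v,u) \<and> d'=(u,v))")
    case True
    hence m: "(u,v) \<in> {(u',v'),(v',u'),(v',w')}" "(v,u) \<in> {(u',v'),(v',u'),(v',w')}"
      using dd(3,4) by auto
    have uv: "{u,v} = {u',v'}" using m d by auto
    moreover have "{v,w} \<noteq> {v',w'}"
    proof
      assume vw: "{v,w} = {v',w'}"
      have "v = v' \<or> v = u'" using uv by (auto simp: doubleton_eq_iff)
      thus False
      proof
        assume "v = v'" thus False using uv vw ne d by (auto simp: doubleton_eq_iff)
      next
        assume "v = u'" hence "u = v'" using uv d by (auto simp: doubleton_eq_iff)
        thus False using vw \<open>v = u'\<close> d by (auto simp: doubleton_eq_iff)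
      qed
    qed
    ultimately show ?thesis by blast
  next
    case False
    hence "(d=(v,u) \<and> d'=(v,w)) \<or> (d=(v,w) \<and> d'=(v,u))" using c by blast
    hence m: "(v,u) \<in> {(u',v'),(v',u'),(v',w')}" "(v,w) \<in> {(u',v'),(v',u'),(v',w')}"
      using dd(3,4) by auto
    have "v = v' \<and> ((u = u' \<and> w = w') \<or> (u = w' \<and> w = u'))" using m d by auto
    hence "v = v'" "u = w'" "w = u'" using ne by auto
    thus ?thesis by (auto simp: insert_commute)
  qed
qed

lemma comb_share:
  fixes u v w u' v' w' :: nat
  assumes d: "u \<noteq> v" "v \<noteq> w" "u \<noteq> w" "u' \<noteq> v'" "v' \<noteq> w'" "u' \<noteq> w'"
  shows "((v,u,w) \<noteq> (v',u',w') \<and> (\<exists>d\<in>{(u,v),(v,u),(v,w)} \<inter> {(u',v'),(v',u'),(v',w')}.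
            \<exists>d'\<in>{(u,v),(v,u),(v,w)} \<inter> {(u',v'),(v',u'),(v',w')}. Rb d d'))
     \<longleftrightarrow> ({u,v} = {u',v'} \<and> {v,w} \<noteq> {v',w'}) \<or> ({u',v'} = {v,w} \<and> {v',w'} = {u,v})"
proof
  assume a: "((v,u,w) \<noteq> (v',u',w') \<and> (\<exists>d\<in>{(u,v),(v,u),(v,w)} \<inter> {(u',v'),(v',u'),(v',w')}.
            \<exists>d'\<in>{(u,v),(v,u),(v,w)} \<inter> {(u',v'),(v',u'),(v',w')}. Rb d d'))"
  then obtain x y where xy: "x \<in> {(u,v),(v,u),(v,w)} \<inter> {(u',v'),(v',u'),(v',w')}"
     "y \<in> {(u,v),(v,u),(v,w)} \<inter> {(u',v'),(v',u'),(v',w')}" "Rb x y" by blast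
  show "({u,v} = {u',v'} \<and> {v,w} \<noteq> {v',w'}) \<or> ({u',v'} = {v,w} \<and> {v',w'} = {u,v})"
    apply (rule comb_share_fwd[OF d _, of x y])
    using a xy by auto
next
  assume "({u,v} = {u',v'} \<and> {v,w} \<noteq> {v',w'}) \<or> ({u',v'} = {v,w} \<and> {v',w'} = {u,v})"
  thus "((v,u,w) \<noteq> (v',u',w') \<and> (\<exists>d\<in>{(u,v),(v,u),(v,w)} \<inter> {(u',v'),(v',u'),(v',w')}.
            \<exists>d'\<in>{(u,v),(v,u),(v,w)} \<inter> {(u',v'),(v',u'),(v',w')}. Rb d d'))"
  proof
    assume a: "{u,v} = {u',v'} \<and> {v,w} \<noteq> {v',w'}"
    hence "(u,v) \<in> {(u',v'),(v',u'),(v',w')}" "(v,u) \<in> {(u',v'),(v',u'),(v',w')}"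
      by (auto simp: doubleton_eq_iff)
    moreover have "Rb (u,v) (v,u)" by (simp add: Rb_def)
    moreover have "(v,u,w) \<noteq> (v',u',w')" using a by auto
    ultimately show ?thesis by blast
  next
    assume a: "{u',v'} = {v,w} \<and> {v',w'} = {u,v}"
    have "v' = v" using a d by (auto simp: doubleton_eq_iff)
    hence "u' = w" "w' = u" using a d by (auto simp: doubleton_eq_iff)
    hence "(v,u) \<in> {(u',v'),(v',u'),(v',w')}" "(v,w) \<in> {(u',v'),(v',u'),(v',w')}"
      using \<open>v' = v\<close> by auto
    moreover have "Rb (v,u) (v,w)" using d by (simp add: Rb_def)
    moreover have "(v,u,w) \<noteq> (v',u',w')" using \<open>u' = w\<close> d by auto
    ultimately show ?thesis by blast
  qed
qed

lemma Trip_facts: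
  assumes wf: "wf_graph G" and t: "(v,u,w) \<in> Trip G"
  shows "adj G v u" "adj G v w" "u \<noteq> w" "u \<noteq> v" "v \<noteq> w" "adj G u v" "adj G w v"
  using t wf_adjD[OF wf] adj_sym unfolding Trip_def by auto

lemma Pt_image: "Pt v u w = prod_encode ` {(u,v),(v,u),(v,w)}"
  by (simp add: Pt_def)

lemma Pt_cbip:
  assumes wf: "wf_graph G" and t: "(v,u,w) \<in> Trip G"
  shows "induced_cbip (burgeon G) (Pt v u w)"
proof -
  note tf = Trip_facts[OF wf t]
  let ?a = "prod_encode (v,u)" and ?b1 = "prod_encode (u,v)" and ?b2 = "prod_encode (v,w)"
  have vs: "?a \<in> verts (burgeon G)" "?b1 \<in> verts (burgeon G)" "?b2 \<in> verts (burgeon G)"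
    using tf verts_burgeon[OF wf] by (auto simp: darts_def)
  have a1: "adj (burgeon G) ?a ?b1" using adj_burgeon[OF wf tf(1) tf(6)] by (simp add: Rb_def)
  have a2: "adj (burgeon G) ?a ?b2" using adj_burgeon[OF wf tf(1) tf(2)] tf by (simp add: Rb_def)
  have n1: "\<not> adj (burgeon G) ?b1 ?b2" using adj_burgeon[OF wf tf(6) tf(2)] tf by (auto simp: Rb_def)
  have n2: "\<not> adj (burgeon G) ?b2 ?b1" using adj_burgeon[OF wf tf(2) tf(6)] tf by (auto simp: Rb_def)
  have n3: "\<not> adj (burgeon G) ?a ?a" using adj_burgeon[OF wf tf(1) tf(1)] tf by (auto simp: Rb_def)
  have n4: "\<not> adj (burgeon G) ?b1 ?b1" using adj_burgeon[OF wf tf(6) tf(6)] tf by (auto simp: Rb_def)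
  have n5: "\<not> adj (burgeon G) ?b2 ?b2" using adj_burgeon[OF wf tf(2) tf(2)] tf by (auto simp: Rb_def)
  have dis: "{?a} \<inter> {?b1, ?b2} = {}" using tf by (auto simp: pe_eq)
  show ?thesis unfolding induced_cbip_def
    apply (rule conjI)
    using vs apply (simp add: Pt_def)
    apply (rule exI[of _ "{?a}"], rule exI[of _ "{?b1, ?b2}"])
    using a1 a2 n1 n2 n3 n4 n5 dis by (auto simp: Pt_def)
qed

lemma Pt_card:
  assumes wf: "wf_graph G" and t: "(v,u,w) \<in> Trip G"
  shows "card (Pt v u w) = 3"
  using Trip_facts[OF wf t] by (simp add: Pt_def pe_eq)

lemma Pt_mono:
  assumes wf: "wf_graph G" and t: "(v,u,w) \<in> Trip G" and t': "(v',u',w') \<in> Trip G"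
    and s: "Pt v u w \<subseteq> Pt v' u' w'"
  shows "Pt v u w = Pt v' u' w'"
  using card_subset_eq[OF _ s] Pt_card[OF wf t] Pt_card[OF wf t'] by (simp add: Pt_def)

lemma Pt_inj:
  assumes wf: "wf_graph G" and t: "(v,u,w) \<in> Trip G" and t': "(v',u',w') \<in> Trip G"
    and s: "Pt v u w = Pt v' u' w'"
  shows "(v,u,w) = (v',u',w')"
proof -
  have i: "inj prod_encode" using inj_prod_encode by blast
  have "prod_encode ` {(u,v),(v,u),(v,w)} = prod_encode ` {(u',v'),(v',u'),(v',w')}"
    using s unfolding Pt_image .
  hence e: "{(u,v),(v,u),(v,w)} = {(u',v'),(v',u'),(v',w')}" by (simp only: inj_image_eq_iff[OF i])
  note a = Trip_facts[OF wf t] and b = Trip_facts[OF wf t']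
  have "v = v' \<and> u = u' \<and> w = w'"
    by (rule comb_inj[OF a(4) a(5) a(3) b(4) b(5) b(3) e])
  thus ?thesis by simp
qed

lemma biclique_burgeon:
  assumes wf: "wf_graph G" and n: "noisol G"
  shows "biclique (burgeon G) S \<longleftrightarrow> (\<exists>t\<in>Trip G. S = Pt (fst t) (fst (snd t)) (snd (snd t)))"
proof
  assume b: "biclique (burgeon G) S"
  then obtain t where t: "t \<in> Trip G" "S \<subseteq> Pt (fst t) (fst (snd t)) (snd (snd t))"
    using cbip_sub_Pt[OF wf n] biclique_cbip by blast
  have "induced_cbip (burgeon G) (Pt (fst t) (fst (snd t)) (snd (snd t)))"
    using Pt_cbip[OF wf] t(1) by (cases t) auto
  hence "Pt (fst t) (fst (snd t)) (snd (snd t)) = S" using bicliqueD[OF b] t(2) by blast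
  thus "\<exists>t\<in>Trip G. S = Pt (fst t) (fst (snd t)) (snd (snd t))" using t(1) by metis
next
  assume "\<exists>t\<in>Trip G. S = Pt (fst t) (fst (snd t)) (snd (snd t))"
  then obtain v u w where t: "(v,u,w) \<in> Trip G" "S = Pt v u w" by auto
  show "biclique (burgeon G) S"
  proof (rule bicliqueI)
    show "induced_cbip (burgeon G) S" using Pt_cbip[OF wf t(1)] t(2) by simp
    fix T assume T: "induced_cbip (burgeon G) T" "S \<subseteq> T"
    obtain t' where t': "t' \<in> Trip G" "T \<subseteq> Pt (fst t') (fst (snd t')) (snd (snd t'))"
      using cbip_sub_Pt[OF wf n T(1)] by blast
    obtain v' u' w' where tt: "t' = (v',u',w')" by (cases t')
    have "Pt v u w \<subseteq> Pt v' u' w'" using T(2) t(2) t' tt by auto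
    hence "Pt v u w = Pt v' u' w'" using Pt_mono[OF wf t(1)] t' tt by auto
    thus "T = S" using T(2) t(2) t' tt by auto
  qed
qed

(* line graph *)

lemma edge_form:
  assumes wf: "wf_graph G" and e: "e \<in> edges G" and v: "v \<in> e"
  shows "\<exists>u. e = {v,u} \<and> adj G v u \<and> u \<noteq> v"
proof -
  have "card e = 2" using wf e by (simp add: wf_graph_def)
  then obtain x y where "e = {x,y}" "x \<noteq> y" by (meson card_2_iff)
  thus ?thesis using v e by (auto simp: adj_def insert_commute)
qed

lemma edges_finite: "wf_graph G \<Longrightarrow> e \<in> edges G \<Longrightarrow> finite e"
proof -
  assume "wf_graph G" "e \<in> edges G"
  hence "card e = 2" unfolding wf_graph_def by blast
  thus "finite e" using card.infinite by fastforce
qed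

lemma adj_lg:
  assumes wf: "wf_graph G" and e: "e \<in> edges G" and f: "f \<in> edges G"
  shows "adj (lg G) (set_encode e) (set_encode f) \<longleftrightarrow> e \<noteq> f \<and> e \<inter> f \<noteq> {}"
proof
  assume "adj (lg G) (set_encode e) (set_encode f)"
  then obtain e' f' where ef: "{set_encode e, set_encode f} = {set_encode e', set_encode f'}"
    "e' \<in> edges G" "f' \<in> edges G" "e' \<noteq> f'" "e' \<inter> f' \<noteq> {}"
    unfolding adj_def lg_def edges_def by auto
  have fin: "finite e" "finite f" "finite e'" "finite f'" using edges_finite wf e f ef by auto
  from ef(1) have "(set_encode e = set_encode e' \<and> set_encode f = set_encode f') \<or>
      (set_encode e = set_encode f' \<and> set_encode f = set_encode e')"
    by (auto simp: doubleton_eq_iff)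
  hence "(e = e' \<and> f = f') \<or> (e = f' \<and> f = e')" using fin set_encode_eq by metis
  thus "e \<noteq> f \<and> e \<inter> f \<noteq> {}" using ef by auto
next
  assume "e \<noteq> f \<and> e \<inter> f \<noteq> {}"
  thus "adj (lg G) (set_encode e) (set_encode f)"
    using e f unfolding adj_def lg_def edges_def by auto
qed

lemma verts_lg: "verts (lg G) = set_encode ` edges G"
  by (simp add: lg_def verts_def)

lemma edges_lg: "edges (lg G) = {{set_encode e, set_encode f} | e f. e \<in> edges G \<and> f \<in> edges G \<and> e \<noteq> f \<and> e \<inter> f \<noteq> {}}"
  by (simp add: lg_def edges_def)

lemma wf_lg:
  assumes wf: "wf_graph G" shows "wf_graph (lg G)"
proof -
  have "edges G \<subseteq> Pow (verts G)" using wf unfolding wf_graph_def by blast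
  hence "finite (edges G)" using wf wf_finite finite_Pow_iff finite_subset by metis
  hence "finite (verts (lg G))" by (simp add: verts_lg)
  moreover have "\<forall>x\<in>edges (lg G). x \<subseteq> verts (lg G) \<and> card x = 2"
  proof
    fix x assume "x \<in> edges (lg G)"
    then obtain e f where ef: "x = {set_encode e, set_encode f}" "e \<in> edges G" "f \<in> edges G" "e \<noteq> f"
      unfolding edges_lg by auto
    have "set_encode e \<noteq> set_encode f" using ef edges_finite[OF wf] set_encode_eq by metis
    thus "x \<subseteq> verts (lg G) \<and> card x = 2" using ef by (auto simp: verts_lg)
  qed
  ultimately show ?thesis by (simp add: wf_graph_def)
qed

lemma lg_vertE:
  assumes "x \<in> verts (lg G)" obtains e where "e \<in> edges G" "x = set_encode e"
  using assms by (auto simp: verts_lg)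

lemma adj_lgE:
  assumes wf: "wf_graph G" and a: "adj (lg G) x y"
  obtains e f where "e \<in> edges G" "f \<in> edges G" "x = set_encode e" "y = set_encode f" "e \<noteq> f" "e \<inter> f \<noteq> {}"
proof -
  have "x \<in> verts (lg G)" "y \<in> verts (lg G)" using wf_adjD[OF wf_lg[OF wf] a] by auto
  then obtain e f where "e \<in> edges G" "f \<in> edges G" "x = set_encode e" "y = set_encode f"
    by (metis lg_vertE)
  thus ?thesis using that a adj_lg[OF wf] by metis
qed

lemma darts_lg:
  assumes wf: "wf_graph G"
  shows "darts (lg G) = (\<lambda>(v,u,w). (set_encode {u,v}, set_encode {v,w})) ` Trip G"
proof
  show "darts (lg G) \<subseteq> (\<lambda>(v,u,w). (set_encode {u,v}, set_encode {v,w})) ` Trip G"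
  proof
    fix p assume "p \<in> darts (lg G)"
    then obtain x y where p: "p = (x,y)" "adj (lg G) x y" unfolding darts_def by auto
    then obtain e f where ef: "e \<in> edges G" "f \<in> edges G" "x = set_encode e" "y = set_encode f" "e \<noteq> f" "e \<inter> f \<noteq> {}"
      using adj_lgE[OF wf] by metis
    obtain v where v: "v \<in> e" "v \<in> f" using ef(6) by blast
    obtain u where u: "e = {v,u}" "adj G v u" using edge_form[OF wf ef(1) v(1)] by blast
    obtain w where w: "f = {v,w}" "adj G v w" using edge_form[OF wf ef(2) v(2)] by blast
    have "u \<noteq> w" using u w ef(5) by auto
    hence "(v,u,w) \<in> Trip G" using u w by (simp add: Trip_def)
    moreover have "p = (set_encode {u,v}, set_encode {v,w})" using p ef u w by (simp add: insert_commute)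
    ultimately show "p \<in> (\<lambda>(v,u,w). (set_encode {u,v}, set_encode {v,w})) ` Trip G"
      using image_eqI[of p "\<lambda>(v,u,w). (set_encode {u,v}, set_encode {v,w})" "(v,u,w)"] by simp
  qed
next
  show "(\<lambda>(v,u,w). (set_encode {u,v}, set_encode {v,w})) ` Trip G \<subseteq> darts (lg G)"
  proof
    fix p assume "p \<in> (\<lambda>(v,u,w). (set_encode {u,v}, set_encode {v,w})) ` Trip G"
    then obtain v u w where t: "(v,u,w) \<in> Trip G" "p = (set_encode {u,v}, set_encode {v,w})" by auto
    note tf = Trip_facts[OF wf t(1)]
    have e: "{u,v} \<in> edges G" "{v,w} \<in> edges G" using tf by (auto simp: adj_def insert_commute)
    have "{u,v} \<noteq> {v,w}" "{u,v} \<inter> {v,w} \<noteq> {}" using tf by (auto simp: doubleton_eq_iff)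
    hence "adj (lg G) (set_encode {u,v}) (set_encode {v,w})" using adj_lg[OF wf e] by simp
    thus "p \<in> darts (lg G)" using t by (simp add: darts_def)
  qed
qed



lemma Dt_adj:
  assumes wf: "wf_graph G" and t: "(v,u,w) \<in> Trip G" and d: "d \<in> {(u,v),(v,u),(v,w)}"
  shows "adj G (fst d) (snd d)"
  using d Trip_facts[OF wf t] by auto

lemma share_Pt:
  assumes wf: "wf_graph G" and t: "(v,u,w) \<in> Trip G" and t': "(v',u',w') \<in> Trip G"
  shows "share_edge (burgeon G) (Pt v u w) (Pt v' u' w') \<longleftrightarrow>
     (\<exists>d\<in>{(u,v),(v,u),(v,w)} \<inter> {(u',v'),(v',u'),(v',w')}.
            \<exists>d'\<in>{(u,v),(v,u),(v,w)} \<inter> {(u',v'),(v',u'),(v',w')}. Rb d d')"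
    (is "?L \<longleftrightarrow> (\<exists>d\<in>?D. \<exists>d'\<in>?D. Rb d d')")
proof -
  have i: "inj prod_encode" using inj_prod_encode by blast
  have int: "Pt v u w \<inter> Pt v' u' w' = prod_encode ` ?D"
    unfolding Pt_image using image_Int[OF i] by metis
  have ad: "adj (burgeon G) (prod_encode d) (prod_encode d') = Rb d d'" if "d \<in> ?D" "d' \<in> ?D" for d d'
  proof -
    have "adj G (fst d) (snd d)" "adj G (fst d') (snd d')" using Dt_adj[OF wf t] that by auto
    thus ?thesis using adj_burgeon[OF wf, of "fst d" "snd d" "fst d'" "snd d'"] by simp
  qed
  show ?thesis
  proof
    assume ?L
    then obtain x y where xy: "x \<in> Pt v u w \<inter> Pt v' u' w'" "y \<in> Pt v u w \<inter> Pt v' u' w'"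
      "adj (burgeon G) x y" unfolding share_edge_def by blast
    then obtain d d' where "d \<in> ?D" "d' \<in> ?D" "x = prod_encode d" "y = prod_encode d'"
      unfolding int by blast
    thus "\<exists>d\<in>?D. \<exists>d'\<in>?D. Rb d d'" using ad xy(3) by blast
  next
    assume "\<exists>d\<in>?D. \<exists>d'\<in>?D. Rb d d'"
    then obtain d d' where dd: "d \<in> ?D" "d' \<in> ?D" "Rb d d'" by blast
    hence "adj (burgeon G) (prod_encode d) (prod_encode d')" using ad by blast
    moreover have "prod_encode d \<in> Pt v u w \<inter> Pt v' u' w'" "prod_encode d' \<in> Pt v u w \<inter> Pt v' u' w'"
      unfolding int using dd by auto
    ultimately show ?L unfolding share_edge_def by blast
  qed
qed

lemma Pt_finite: "finite (Pt v u w)"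
  by (simp add: Pt_def)

lemma KBe_burgeon:
  assumes wf: "wf_graph G" and n: "noisol G"
  shows "giso (KBe (burgeon G)) (burgeon (lg G))"
proof (rule iso_param[where T = "Trip G" and \<alpha> = "\<lambda>(v,u,w). set_encode (Pt v u w)"
      and \<beta> = "\<lambda>(v,u,w). prod_encode (set_encode {u,v}, set_encode {v,w})"])
  have "{S. biclique (burgeon G) S} = (\<lambda>t. Pt (fst t) (fst (snd t)) (snd (snd t))) ` Trip G"
    by (rule set_eqI) (simp only: mem_Collect_eq biclique_burgeon[OF wf n] image_iff)
  thus "verts (KBe (burgeon G)) = (\<lambda>(v,u,w). set_encode (Pt v u w)) ` Trip G"
    unfolding verts_KBe by (simp add: case_prod_beta image_comp comp_def)
  show "verts (burgeon (lg G)) = (\<lambda>(v,u,w). prod_encode (set_encode {u,v}, set_encode {v,w})) ` Trip G"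
    unfolding verts_burgeon[OF wf_lg[OF wf]] darts_lg[OF wf] image_image by (simp add: case_prod_beta)
  show "inj_on (\<lambda>(v,u,w). set_encode (Pt v u w)) (Trip G)"
  proof (rule inj_onI)
    fix t t' assume tt: "t \<in> Trip G" "t' \<in> Trip G"
      "(\<lambda>(v,u,w). set_encode (Pt v u w)) t = (\<lambda>(v,u,w). set_encode (Pt v u w)) t'"
    obtain v u w v' u' w' where tv: "t = (v,u,w)" "t' = (v',u',w')" by (cases t, cases t') auto
    have "set_encode (Pt v u w) = set_encode (Pt v' u' w')" using tt tv by simp
    hence "Pt v u w = Pt v' u' w'" using set_encode_eq[OF Pt_finite Pt_finite] by simp
    thus "t = t'" using Pt_inj[OF wf] tt tv by simp
  qed
  show "inj_on (\<lambda>(v,u,w). prod_encode (set_encode {u,v}, set_encode {v,w})) (Trip G)"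
  proof (rule inj_onI)
    fix t t' assume tt: "t \<in> Trip G" "t' \<in> Trip G"
      "(\<lambda>(v,u,w). prod_encode (set_encode {u,v}, set_encode {v,w})) t = (\<lambda>(v,u,w). prod_encode (set_encode {u,v}, set_encode {v,w})) t'"
    obtain v u w v' u' w' where tv: "t = (v,u,w)" "t' = (v',u',w')" by (cases t, cases t') auto
    have "set_encode {u,v} = set_encode {u',v'}" "set_encode {v,w} = set_encode {v',w'}"
      using tt tv by (simp_all add: pe_eq)
    hence e: "{u,v} = {u',v'}" "{v,w} = {v',w'}" using set_encode_eq[of "{_,_}" "{_,_}"] by auto
    note a = Trip_facts[OF wf tt(1)[unfolded tv]] and b = Trip_facts[OF wf tt(2)[unfolded tv]]
    have "v = v'"
    proof -
      have "v \<in> {u',v'}" "v \<in> {v',w'}" using e by blast+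
      thus ?thesis using b(3) by blast
    qed
    hence "u = u'" "w = w'" using e by (auto simp: doubleton_eq_iff)
    thus "t = t'" using tv \<open>v = v'\<close> by simp
  qed
  fix t t' assume tt: "t \<in> Trip G" "t' \<in> Trip G"
  obtain v u w v' u' w' where tv: "t = (v,u,w)" "t' = (v',u',w')" by (cases t, cases t') auto
  have t1: "(v,u,w) \<in> Trip G" and t2: "(v',u',w') \<in> Trip G" using tt tv by auto
  note a = Trip_facts[OF wf t1] and b = Trip_facts[OF wf t2]
  have bi: "biclique (burgeon G) (Pt v u w)" "biclique (burgeon G) (Pt v' u' w')"
    unfolding biclique_burgeon[OF wf n]
    using t1 t2 by (intro bexI[of _ "(v,u,w)"], simp_all) (intro bexI[of _ "(v',u',w')"], simp_all)
  have L: "adj (KBe (burgeon G)) (set_encode (Pt v u w)) (set_encode (Pt v' u' w')) \<longleftrightarrow>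
     ({u,v} = {u',v'} \<and> {v,w} \<noteq> {v',w'}) \<or> ({u',v'} = {v,w} \<and> {v',w'} = {u,v})"
  proof -
    have "(Pt v u w \<noteq> Pt v' u' w') = ((v,u,w) \<noteq> (v',u',w'))" using Pt_inj[OF wf t1 t2] by auto
    thus ?thesis using adj_KBe[OF wf_burgeon[OF wf] bi] share_Pt[OF wf t1 t2]
      comb_share[OF a(4) a(5) a(3) b(4) b(5) b(3)] by simp
  qed
  have dl: "adj (lg G) (set_encode {u,v}) (set_encode {v,w})" "adj (lg G) (set_encode {u',v'}) (set_encode {v',w'})"
    using darts_lg[OF wf] t1 t2 unfolding darts_def by force+
  have fin: "finite {u,v}" "finite {v,w}" "finite {u',v'}" "finite {v',w'}" by auto
  have R: "adj (burgeon (lg G)) (prod_encode (set_encode {u,v}, set_encode {v,w}))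
      (prod_encode (set_encode {u',v'}, set_encode {v',w'})) \<longleftrightarrow>
     ({u,v} = {u',v'} \<and> {v,w} \<noteq> {v',w'}) \<or> ({u',v'} = {v,w} \<and> {v',w'} = {u,v})"
    using adj_burgeon[OF wf_lg[OF wf] dl] unfolding Rb_def
    by (simp add: set_encode_eq[OF fin(1) fin(3)] set_encode_eq[OF fin(2) fin(4)]
          set_encode_eq[OF fin(3) fin(2)] set_encode_eq[OF fin(4) fin(1)])
  show "adj (burgeon (lg G)) ((\<lambda>(v,u,w). prod_encode (set_encode {u,v}, set_encode {v,w})) t)
          ((\<lambda>(v,u,w). prod_encode (set_encode {u,v}, set_encode {v,w})) t') =
        adj (KBe (burgeon G)) ((\<lambda>(v,u,w). set_encode (Pt v u w)) t) ((\<lambda>(v,u,w). set_encode (Pt v u w)) t')"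
    using L R tv by simp
qed



definition nbrs :: "ugraph \<Rightarrow> nat \<Rightarrow> nat set" where
  "nbrs G v = {u. adj G v u}"

lemma nbrs_sub: "wf_graph G \<Longrightarrow> nbrs G v \<subseteq> verts G"
  unfolding nbrs_def using wf_adjD by blast

lemma finite_nbrs: "wf_graph G \<Longrightarrow> finite (nbrs G v)"
  using nbrs_sub wf_finite finite_subset by metis

lemma wf_edge_adj:
  assumes "wf_graph G" "e \<in> edges G" obtains x y where "e = {x,y}" "adj G x y" "x \<noteq> y"
proof -
  have "card e = 2" using assms unfolding wf_graph_def by blast
  then obtain x y where "e = {x,y}" "x \<noteq> y" by (meson card_2_iff)
  thus ?thesis using that assms(2) by (simp add: adj_def)
qed

lemma adj_edge: "adj G x y \<Longrightarrow> {x,y} \<in> edges G"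
  by (simp add: adj_def)

lemma lg_reach:
  assumes wf: "wf_graph G" and r: "(adj G)\<^sup>*\<^sup>* a b"
  shows "\<And>e f. e \<in> edges G \<Longrightarrow> a \<in> e \<Longrightarrow> f \<in> edges G \<Longrightarrow> b \<in> f \<Longrightarrow>
     (adj (lg G))\<^sup>*\<^sup>* (set_encode e) (set_encode f)"
  using r
proof (induction rule: rtranclp_induct)
  case base
  show ?case
  proof (cases "e = f")
    case True thus ?thesis by simp
  next
    case False
    hence "adj (lg G) (set_encode e) (set_encode f)" using adj_lg[OF wf base(1,3)] base by blast
    thus ?thesis by simp
  qed
next
  case (step y z)
  have g: "{y,z} \<in> edges G" using step(2) adj_edge by blast
  have r1: "(adj (lg G))\<^sup>*\<^sup>* (set_encode e) (set_encode {y,z})" using step.IH[OF step(4,5) g] by simp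
  show ?case
  proof (cases "{y,z} = f")
    case True thus ?thesis using r1 by simp
  next
    case False
    hence "adj (lg G) (set_encode {y,z}) (set_encode f)" using adj_lg[OF wf g step(6)] step(7) by blast
    thus ?thesis using r1 by simp
  qed
qed

lemma lg_connected:
  assumes wf: "wf_graph G" and c: "connected_graph G"
  shows "connected_graph (lg G)"
  unfolding connected_graph_def
proof (intro ballI)
  fix x y assume "x \<in> verts (lg G)" "y \<in> verts (lg G)"
  then obtain e f where ef: "e \<in> edges G" "f \<in> edges G" "x = set_encode e" "y = set_encode f"
    by (metis lg_vertE)
  obtain a b where ab: "e = {a,b}" "adj G a b" using wf_edge_adj[OF wf ef(1)] by metis
  obtain c d where cd: "f = {c,d}" "adj G c d" using wf_edge_adj[OF wf ef(2)] by metis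
  have "a \<in> verts G" "c \<in> verts G" using wf_adjD[OF wf ab(2)] wf_adjD[OF wf cd(2)] by auto
  hence "(adj G)\<^sup>*\<^sup>* a c" using c connected_graph_def by blast
  thus "(adj (lg G))\<^sup>*\<^sup>* x y" using lg_reach[OF wf _ ef(1) _ ef(2)] ab cd ef by blast
qed

lemma isol_reach:
  assumes "(adj G)\<^sup>*\<^sup>* a x" and "nbrs G a \<subseteq> {b}" "nbrs G b \<subseteq> {a}"
  shows "x \<in> {a,b}"
  using assms(1)
proof (induction rule: rtranclp_induct)
  case base thus ?case by simp
next
  case (step y z)
  thus ?case using assms(2,3) unfolding nbrs_def by auto
qed

lemma isol_all:
  assumes wf: "wf_graph G" and c: "connected_graph G" and ab: "adj G a b"
    and na: "nbrs G a \<subseteq> {b}" and nb: "nbrs G b \<subseteq> {a}"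
  shows "verts G \<subseteq> {a,b}"
proof
  fix x assume "x \<in> verts G"
  moreover have "a \<in> verts G" using wf_adjD[OF wf ab] by simp
  ultimately have "(adj G)\<^sup>*\<^sup>* a x" using c connected_graph_def by blast
  thus "x \<in> {a,b}" using isol_reach na nb by metis
qed

lemma noisol_conn:
  assumes wf: "wf_graph G" and c: "connected_graph G" and d: "adj G p q" "adj G p r" "q \<noteq> r"
  shows "noisol G"
  unfolding noisol_def
proof (intro allI impI)
  fix a b assume ab0: "adj G a b"
  show "(\<exists>w. w \<noteq> b \<and> adj G a w) \<or> (\<exists>w. w \<noteq> a \<and> adj G b w)"
  proof (rule ccontr)
    assume nn: "\<not> ((\<exists>w. w \<noteq> b \<and> adj G a w) \<or> (\<exists>w. w \<noteq> a \<and> adj G b w))"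
    have "nbrs G a \<subseteq> {b}" "nbrs G b \<subseteq> {a}" using nn unfolding nbrs_def by auto
    hence V: "verts G \<subseteq> {a,b}" using isol_all[OF wf c ab0] by blast
    have pqr: "p \<in> verts G" "q \<in> verts G" "r \<in> verts G" "p \<noteq> q" "p \<noteq> r" using d wf_adjD[OF wf] by auto
    show False
    proof (cases "p = a")
      case True
      hence "q = b" "r = b" using pqr V by auto
      thus False using d(3) by simp
    next
      case False
      hence "p = b" using pqr V by auto
      hence "q = a" "r = a" using pqr V by auto
      thus False using d(3) by simp
    qed
  qed
qed

lemma adj_lgI:
  assumes "wf_graph G" "e \<in> edges G" "f \<in> edges G" "e \<noteq> f" "x \<in> e" "x \<in> f"
  shows "adj (lg G) (set_encode e) (set_encode f)"
  using adj_lg[OF assms(1-3)] assms(4-6) by blast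

definition tri :: "ugraph \<Rightarrow> bool" where
  "tri G \<longleftrightarrow> (\<exists>a b c. adj G a b \<and> adj G b c \<and> adj G a c)"

lemma tri_lg:
  assumes wf: "wf_graph G" and t: "tri G" shows "tri (lg G)"
proof -
  obtain a b c where abc: "adj G a b" "adj G b c" "adj G a c" using t tri_def by blast
  have d: "a \<noteq> b" "b \<noteq> c" "a \<noteq> c" using abc wf_adjD[OF wf] by auto
  have e: "{a,b} \<in> edges G" "{b,c} \<in> edges G" "{a,c} \<in> edges G" using abc adj_edge by auto
  have "adj (lg G) (set_encode {a,b}) (set_encode {b,c})"
    by (rule adj_lgI[OF wf e(1) e(2), of b]; use d in \<open>auto simp: doubleton_eq_iff\<close>)
  moreover have "adj (lg G) (set_encode {b,c}) (set_encode {a,c})"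
    by (rule adj_lgI[OF wf e(2) e(3), of c]; use d in \<open>auto simp: doubleton_eq_iff\<close>)
  moreover have "adj (lg G) (set_encode {a,b}) (set_encode {a,c})"
    by (rule adj_lgI[OF wf e(1) e(3), of a]; use d in \<open>auto simp: doubleton_eq_iff\<close>)
  ultimately show ?thesis unfolding tri_def by blast
qed

lemma star_tri:
  assumes wf: "wf_graph G" and s: "adj G v a" "adj G v b" "adj G v c" "a \<noteq> b" "b \<noteq> c" "a \<noteq> c"
  shows "tri (lg G)"
proof -
  have e: "{v,a} \<in> edges G" "{v,b} \<in> edges G" "{v,c} \<in> edges G" using s adj_edge by auto
  have "adj (lg G) (set_encode {v,a}) (set_encode {v,b})"
    by (rule adj_lgI[OF wf e(1) e(2), of v]; use s in \<open>auto simp: doubleton_eq_iff\<close>)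
  moreover have "adj (lg G) (set_encode {v,b}) (set_encode {v,c})"
    by (rule adj_lgI[OF wf e(2) e(3), of v]; use s in \<open>auto simp: doubleton_eq_iff\<close>)
  moreover have "adj (lg G) (set_encode {v,a}) (set_encode {v,c})"
    by (rule adj_lgI[OF wf e(1) e(3), of v]; use s in \<open>auto simp: doubleton_eq_iff\<close>)
  ultimately show ?thesis unfolding tri_def by blast
qed

lemma tri_noisol:
  assumes wf: "wf_graph G" and c: "connected_graph G" and t: "tri G" shows "noisol G"
proof -
  obtain a b c where abc: "adj G a b" "adj G b c" "adj G a c" using t tri_def by blast
  have "b \<noteq> c" using abc wf_adjD[OF wf] by auto
  thus ?thesis using noisol_conn[OF wf c abc(1) abc(3)] by blast
qed

lemma wf_lg_iter: "wf_graph G \<Longrightarrow> wf_graph ((lg ^^ k) G)"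
  by (induction k) (auto simp: wf_lg)

lemma conn_lg_iter: "wf_graph G \<Longrightarrow> connected_graph G \<Longrightarrow> connected_graph ((lg ^^ k) G)"
  by (induction k) (auto simp: lg_connected wf_lg_iter)

lemma wf_KBe_iter: "wf_graph G \<Longrightarrow> wf_graph ((KBe ^^ k) G)"
  by (induction k) (auto simp: wf_KBe)

lemma iter_iso:
  assumes wf: "wf_graph G" and n: "\<forall>j<k. noisol ((lg ^^ j) G)"
  shows "giso ((KBe ^^ k) (burgeon G)) (burgeon ((lg ^^ k) G))"
  using n
proof (induction k)
  case 0 thus ?case by (simp add: iso_refl)
next
  case (Suc k)
  have i1: "giso ((KBe ^^ k) (burgeon G)) (burgeon ((lg ^^ k) G))" using Suc by simp
  have w1: "wf_graph ((KBe ^^ k) (burgeon G))" using wf_KBe_iter wf_burgeon wf by blast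
  have w2: "wf_graph (burgeon ((lg ^^ k) G))" using wf_burgeon wf_lg_iter wf by blast
  have "giso (KBe ((KBe ^^ k) (burgeon G))) (KBe (burgeon ((lg ^^ k) G)))"
    using KBe_iso[OF w1 w2 i1] .
  moreover have "giso (KBe (burgeon ((lg ^^ k) G))) (burgeon (lg ((lg ^^ k) G)))"
    using KBe_burgeon[OF wf_lg_iter[OF wf]] Suc.prems by simp
  ultimately show ?case using iso_trans by simp
qed

lemma card_verts_burgeon: "wf_graph G \<Longrightarrow> card (verts (burgeon G)) = card (darts G)"
  using verts_burgeon card_image inj_prod_encode by (metis inj_on_subset subset_UNIV)

lemma KBe_small:
  assumes wf: "wf_graph H" and e: "card (edges H) \<le> 1" and fe: "finite (edges H)"
  shows "card (verts (KBe H)) \<le> 1"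
proof -
  have "{S. biclique H S} \<subseteq> edges H"
  proof
    fix S assume "S \<in> {S. biclique H S}"
    hence "induced_cbip H S" using biclique_cbip by blast
    then obtain A B where AB: "A \<noteq> {}" "B \<noteq> {}" "A \<union> B = S" "\<forall>a\<in>A. \<forall>b\<in>B. adj H a b"
      unfolding induced_cbip_def by blast
    obtain a b where ab: "a \<in> A" "b \<in> B" using AB by blast
    have ed: "{a,b} \<in> edges H" using AB(4) ab adj_edge by blast
    have all: "{a',b'} = {a,b}" if "a' \<in> A" "b' \<in> B" for a' b'
    proof -
      have "{a',b'} \<in> edges H" using AB(4) that adj_edge by blast
      moreover have "x = y" if "x \<in> edges H" "y \<in> edges H" for x y
      proof (rule ccontr)
        assume "x \<noteq> y"
        hence "card {x,y} = 2" by simp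
        moreover have "card {x,y} \<le> card (edges H)" using that fe by (intro card_mono) auto
        ultimately show False using e by simp
      qed
      ultimately show ?thesis using ed by blast
    qed
    have "S = {a,b}"
    proof
      show "{a,b} \<subseteq> S" using ab AB(3) by blast
      show "S \<subseteq> {a,b}"
      proof
        fix x assume "x \<in> S"
        hence "x \<in> A \<or> x \<in> B" using AB(3) by blast
        thus "x \<in> {a,b}" using all[of x b] all[of a x] ab by blast
      qed
    qed
    thus "S \<in> edges H" using ed by simp
  qed
  hence "card {S. biclique H S} \<le> 1" using e fe card_mono le_trans by metis
  thus ?thesis unfolding verts_KBe using card_image_le[of "{S. biclique H S}" set_encode]
    finite_bicliques[OF wf] by linarith
qed

lemma card_le1_edges: "wf_graph H \<Longrightarrow> card (verts H) \<le> 1 \<Longrightarrow> edges H = {}"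
proof -
  assume wf: "wf_graph H" and c: "card (verts H) \<le> 1"
  show "edges H = {}"
  proof (rule ccontr)
    assume "edges H \<noteq> {}"
    then obtain e where "e \<in> edges H" by blast
    then obtain x y where "adj H x y" by (metis wf wf_edge_adj)
    hence "x \<noteq> y" "x \<in> verts H" "y \<in> verts H" using wf_adjD[OF wf] by auto
    thus False using c wf_finite[OF wf] by (metis card_le_Suc0_iff_eq One_nat_def)
  qed
qed

lemma finite_edges: "wf_graph G \<Longrightarrow> finite (edges G)"
proof -
  assume wf: "wf_graph G"
  have "edges G \<subseteq> Pow (verts G)" using wf unfolding wf_graph_def by blast
  thus ?thesis using wf wf_finite finite_Pow_iff finite_subset by metis
qed

lemma burgeon_K2_edges:
  assumes wf: "wf_graph H" and V: "verts H \<subseteq> {a,b}"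
  shows "card (edges (burgeon H)) \<le> 1"
proof -
  have "edges (burgeon H) \<subseteq> {{prod_encode (a,b), prod_encode (b,a)}}"
  proof
    fix e assume "e \<in> edges (burgeon H)"
    then consider (x) v u w where "e = {prod_encode (v, u), prod_encode (v, w)}" "adj H v u" "adj H v w" "u \<noteq> w"
      | (y) v u where "e = {prod_encode (v, u), prod_encode (u, v)}" "adj H v u"
      unfolding edges_burgeon by blast
    thus "e \<in> {{prod_encode (a,b), prod_encode (b,a)}}"
    proof cases
      case x
      have "v \<noteq> u" "v \<noteq> w" "v \<in> verts H" "u \<in> verts H" "w \<in> verts H" using x wf_adjD[OF wf] by auto
      thus ?thesis using V x(4) by auto
    next
      case y
      have "v \<noteq> u" "v \<in> verts H" "u \<in> verts H" using y wf_adjD[OF wf] by auto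
      thus ?thesis using V y(1) by (auto simp: insert_commute)
    qed
  qed
  hence "card (edges (burgeon H)) \<le> card {{prod_encode (a,b), prod_encode (b,a)}}"
    by (intro card_mono) simp_all
  thus ?thesis by simp
qed



lemma nbrs_lg_out: "wf_graph G \<Longrightarrow> z \<notin> verts (lg G) \<Longrightarrow> nbrs (lg G) z = {}"
  unfolding nbrs_def using wf_adjD[OF wf_lg] by blast

lemma nbrs_lg:
  assumes wf: "wf_graph G" and a: "adj G x y"
  shows "nbrs (lg G) (set_encode {x,y}) =
    (\<lambda>w. set_encode {x,w}) ` (nbrs G x - {y}) \<union> (\<lambda>w. set_encode {y,w}) ` (nbrs G y - {x})"
proof -
  have exy: "{x,y} \<in> edges G" using a adj_edge by blast
  have xy: "x \<noteq> y" using wf_adjD[OF wf a] by simp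
  show ?thesis
  proof (rule set_eqI)
    fix z
    show "z \<in> nbrs (lg G) (set_encode {x,y}) \<longleftrightarrow>
      z \<in> (\<lambda>w. set_encode {x,w}) ` (nbrs G x - {y}) \<union> (\<lambda>w. set_encode {y,w}) ` (nbrs G y - {x})"
    proof
      assume "z \<in> nbrs (lg G) (set_encode {x,y})"
      hence "adj (lg G) (set_encode {x,y}) z" by (simp add: nbrs_def)
      then obtain e f where ef: "e \<in> edges G" "f \<in> edges G" "set_encode {x,y} = set_encode e" "z = set_encode f" "e \<noteq> f" "e \<inter> f \<noteq> {}"
        using adj_lgE[OF wf] by metis
      have "e = {x,y}" using ef(3) set_encode_eq[OF _ edges_finite[OF wf ef(1)], of "{x,y}"] by simp
      hence f1: "f \<noteq> {x,y}" "x \<in> f \<or> y \<in> f" using ef by auto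
      thus "z \<in> (\<lambda>w. set_encode {x,w}) ` (nbrs G x - {y}) \<union> (\<lambda>w. set_encode {y,w}) ` (nbrs G y - {x})"
      proof (cases "x \<in> f")
        case True
        obtain w where w: "f = {x,w}" "adj G x w" using edge_form[OF wf ef(2) True] by blast
        have "w \<noteq> y" using w f1 by auto
        hence "w \<in> nbrs G x - {y}" using w by (simp add: nbrs_def)
        thus ?thesis using ef(4) w by blast
      next
        case False
        hence yf: "y \<in> f" using f1 by blast
        obtain w where w: "f = {y,w}" "adj G y w" using edge_form[OF wf ef(2) yf] by blast
        have "w \<noteq> x" using w f1 by (auto simp: insert_commute)
        hence "w \<in> nbrs G y - {x}" using w by (simp add: nbrs_def)
        thus ?thesis using ef(4) w by blast
      qed
    next
      assume "z \<in> (\<lambda>w. set_encode {x,w}) ` (nbrs G x - {y}) \<union> (\<lambda>w. set_encode {y,w}) ` (nbrs G y - {x})"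
      then consider (l) w where "w \<in> nbrs G x - {y}" "z = set_encode {x,w}"
        | (r) w where "w \<in> nbrs G y - {x}" "z = set_encode {y,w}" by blast
      hence "adj (lg G) (set_encode {x,y}) z"
      proof cases
        case l
        have e: "{x,w} \<in> edges G" using l adj_edge by (simp add: nbrs_def)
        have "{x,y} \<noteq> {x,w}" using l xy by (auto simp: doubleton_eq_iff)
        thus ?thesis using adj_lgI[OF wf exy e, of x] l(2) by simp
      next
        case r
        have e: "{y,w} \<in> edges G" using r adj_edge by (simp add: nbrs_def)
        have "{x,y} \<noteq> {y,w}" using r xy by (auto simp: doubleton_eq_iff)
        thus ?thesis using adj_lgI[OF wf exy e, of y] r(2) by simp
      qed
      thus "z \<in> nbrs (lg G) (set_encode {x,y})" by (simp add: nbrs_def)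
    qed
  qed
qed

lemma deg_lg:
  assumes wf: "wf_graph G" and a: "adj G x y"
  shows "card (nbrs (lg G) (set_encode {x,y})) = (card (nbrs G x) - 1) + (card (nbrs G y) - 1)"
proof -
  have xy: "x \<noteq> y" using wf_adjD[OF wf a] by simp
  have i1: "inj_on (\<lambda>w. set_encode {x,w}) (nbrs G x - {y})"
    by (rule inj_onI) (auto simp: set_encode_eq doubleton_eq_iff)
  have i2: "inj_on (\<lambda>w. set_encode {y,w}) (nbrs G y - {x})"
    by (rule inj_onI) (auto simp: set_encode_eq doubleton_eq_iff)
  have dis: "(\<lambda>w. set_encode {x,w}) ` (nbrs G x - {y}) \<inter> (\<lambda>w. set_encode {y,w}) ` (nbrs G y - {x}) = {}"
    using xy by (auto simp: set_encode_eq doubleton_eq_iff)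
  have f: "finite (nbrs G x - {y})" "finite (nbrs G y - {x})" using finite_nbrs[OF wf] by auto
  have "y \<in> nbrs G x" "x \<in> nbrs G y" using a adj_sym by (auto simp: nbrs_def)
  hence c: "card (nbrs G x - {y}) = card (nbrs G x) - 1" "card (nbrs G y - {x}) = card (nbrs G y) - 1"
    by (simp_all add: card_Diff_singleton)
  show ?thesis unfolding nbrs_lg[OF wf a]
    using card_Un_disjoint[OF finite_imageI[OF f(1)] finite_imageI[OF f(2)] dis]
      card_image[OF i1] card_image[OF i2] c by simp
qed

definition Pg :: "ugraph \<Rightarrow> bool" where
  "Pg G \<longleftrightarrow> (\<forall>v. card (nbrs G v) \<noteq> 1) \<and> (\<exists>v. card (nbrs G v) \<ge> 3)"

definition Sc :: "ugraph \<Rightarrow> bool" where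
  "Sc G \<longleftrightarrow> (\<forall>x y. adj G x y \<longrightarrow> card (nbrs G x) + card (nbrs G y) \<ge> 4) \<and>
             (\<exists>x y. adj G x y \<and> card (nbrs G x) + card (nbrs G y) \<ge> 5)"

definition Mx :: "ugraph \<Rightarrow> bool" where
  "Mx G \<longleftrightarrow> (\<forall>v. card (nbrs G v) \<le> 2)"

definition Ec :: "ugraph \<Rightarrow> bool" where
  "Ec G \<longleftrightarrow> (\<forall>x y. adj G x y \<longrightarrow> card (nbrs G x) + card (nbrs G y) \<le> 4)"

lemma deg_pos: "wf_graph G \<Longrightarrow> adj G x y \<Longrightarrow> card (nbrs G x) \<ge> 1"
proof -
  assume "wf_graph G" "adj G x y"
  hence "y \<in> nbrs G x" "finite (nbrs G x)" using finite_nbrs by (auto simp: nbrs_def)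
  thus ?thesis by (metis One_nat_def Suc_leI card_gt_0_iff empty_iff)
qed

lemma lg_vert_edge:
  assumes wf: "wf_graph G" and z: "z \<in> verts (lg G)"
  obtains x y where "adj G x y" "z = set_encode {x,y}"
proof -
  obtain e where e: "e \<in> edges G" "z = set_encode e" using z lg_vertE by metis
  obtain x y where "e = {x,y}" "adj G x y" using wf_edge_adj[OF wf e(1)] by metis
  thus ?thesis using that e by blast
qed

lemma Pg_lg:
  assumes wf: "wf_graph G" and s: "Sc G" shows "Pg (lg G)"
  unfolding Pg_def
proof
  show "\<forall>v. card (nbrs (lg G) v) \<noteq> 1"
  proof
    fix z show "card (nbrs (lg G) z) \<noteq> 1"
    proof (cases "z \<in> verts (lg G)")
      case False thus ?thesis using nbrs_lg_out[OF wf] by simp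
    next
      case True
      then obtain x y where xy: "adj G x y" "z = set_encode {x,y}" using lg_vert_edge[OF wf] by metis
      have "card (nbrs G x) + card (nbrs G y) \<ge> 4" using s xy Sc_def by blast
      thus ?thesis using deg_lg[OF wf xy(1)] xy(2) deg_pos[OF wf xy(1)] by simp
    qed
  qed
  obtain x y where xy: "adj G x y" "card (nbrs G x) + card (nbrs G y) \<ge> 5" using s Sc_def by blast
  have "adj G y x" using xy adj_sym by metis
  hence "card (nbrs (lg G) (set_encode {x,y})) \<ge> 3"
    using deg_lg[OF wf xy(1)] xy(2) deg_pos[OF wf xy(1)] deg_pos[OF wf] by fastforce
  thus "\<exists>v. card (nbrs (lg G) v) \<ge> 3" by blast
qed

lemma Pg_Sc:
  assumes wf: "wf_graph G" and p: "Pg G" shows "Sc G"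
  unfolding Sc_def
proof
  have d2: "card (nbrs G x) \<ge> 2" if "adj G x y" for x y
    using deg_pos[OF wf that] p Pg_def by (metis One_nat_def Suc_1 Suc_leI le_neq_implies_less)
  show "\<forall>x y. adj G x y \<longrightarrow> 4 \<le> card (nbrs G x) + card (nbrs G y)"
  proof (intro allI impI)
    fix x y assume "adj G x y"
    moreover hence "adj G y x" using adj_sym by metis
    ultimately have "card (nbrs G x) \<ge> 2" "card (nbrs G y) \<ge> 2" using d2 by blast+
    thus "4 \<le> card (nbrs G x) + card (nbrs G y)" by simp
  qed
  obtain v where v: "card (nbrs G v) \<ge> 3" using p Pg_def by blast
  hence "nbrs G v \<noteq> {}" by (metis card.empty not_numeral_le_zero)
  then obtain u where "u \<in> nbrs G v" by blast
  hence u: "adj G v u" by (simp add: nbrs_def)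
  hence "adj G u v" using adj_sym by metis
  hence "card (nbrs G u) \<ge> 2" using d2 by blast
  thus "\<exists>x y. adj G x y \<and> 5 \<le> card (nbrs G x) + card (nbrs G y)" using u v by fastforce
qed

lemma Pg_lg_pres: "wf_graph G \<Longrightarrow> Pg G \<Longrightarrow> Pg (lg G)"
  using Pg_lg Pg_Sc by blast

lemma Mx_lg:
  assumes wf: "wf_graph G" and e: "Ec G" shows "Mx (lg G)"
  unfolding Mx_def
proof
  fix z show "card (nbrs (lg G) z) \<le> 2"
  proof (cases "z \<in> verts (lg G)")
    case False thus ?thesis using nbrs_lg_out[OF wf] by simp
  next
    case True
    then obtain x y where xy: "adj G x y" "z = set_encode {x,y}" using lg_vert_edge[OF wf] by metis
    have "card (nbrs G x) + card (nbrs G y) \<le> 4" using e xy Ec_def by blast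
    moreover have "adj G y x" using xy adj_sym by metis
    ultimately show ?thesis using deg_lg[OF wf xy(1)] xy(2) deg_pos[OF wf xy(1)] deg_pos[OF wf \<open>adj G y x\<close>] by simp
  qed
qed

lemma Mx_Ec: "Mx G \<Longrightarrow> Ec G"
  unfolding Mx_def Ec_def by (metis add_mono numeral_Bit0 numeral_plus_numeral One_nat_def)

lemma Mx_lg_pres: "wf_graph G \<Longrightarrow> Mx G \<Longrightarrow> Mx (lg G)"
  using Mx_lg Mx_Ec by blast

lemma Trip_sub: "wf_graph G \<Longrightarrow> Trip G \<subseteq> verts G \<times> verts G \<times> verts G"
  unfolding Trip_def using wf_adjD by blast

lemma finite_Trip: "wf_graph G \<Longrightarrow> finite (Trip G)"
  using Trip_sub wf_finite finite_subset by (metis finite_SigmaI)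

lemma card_darts_lg:
  assumes wf: "wf_graph G" shows "card (darts (lg G)) = card (Trip G)"
proof -
  have "inj_on (\<lambda>(v,u,w). (set_encode {u,v}, set_encode {v,w})) (Trip G)"
  proof (rule inj_onI)
    fix t t' assume tt: "t \<in> Trip G" "t' \<in> Trip G"
      "(\<lambda>(v,u,w). (set_encode {u,v}, set_encode {v,w})) t = (\<lambda>(v,u,w). (set_encode {u,v}, set_encode {v,w})) t'"
    obtain v u w v' u' w' where tv: "t = (v,u,w)" "t' = (v',u',w')" by (cases t, cases t') auto
    have "set_encode {u,v} = set_encode {u',v'}" "set_encode {v,w} = set_encode {v',w'}"
      using tt tv by simp_all
    hence e: "{u,v} = {u',v'}" "{v,w} = {v',w'}" using set_encode_eq[of "{_,_}" "{_,_}"] by auto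
    note b = Trip_facts[OF wf tt(2)[unfolded tv]]
    have "v = v'"
    proof -
      have "v \<in> {u',v'}" "v \<in> {v',w'}" using e by blast+
      thus ?thesis using b(3) by blast
    qed
    hence "u = u'" "w = w'" using e by (auto simp: doubleton_eq_iff)
    thus "t = t'" using tv \<open>v = v'\<close> by simp
  qed
  thus ?thesis unfolding darts_lg[OF wf] by (rule card_image)
qed

lemma Trip_le:
  assumes wf: "wf_graph G" and m: "Mx G" shows "card (Trip G) \<le> card (darts G)"
proof -
  have "inj_on (\<lambda>(v,u,w). (v,u)) (Trip G)"
  proof (rule inj_onI)
    fix t t' assume tt: "t \<in> Trip G" "t' \<in> Trip G" "(\<lambda>(v,u,w). (v,u)) t = (\<lambda>(v,u,w). (v,u)) t'"
    obtain v u w v' u' w' where tv: "t = (v,u,w)" "t' = (v',u',w')" by (cases t, cases t') auto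
    have e: "v' = v" "u' = u" using tt tv by auto
    have a: "adj G v u" "adj G v w" "u \<noteq> w" "adj G v w'" "u \<noteq> w'" using tt tv e by (auto simp: Trip_def)
    show "t = t'"
    proof (rule ccontr)
      assume "t \<noteq> t'"
      hence "w \<noteq> w'" using tv e by auto
      hence "card {u,w,w'} = 3" using a by auto
      moreover have "{u,w,w'} \<subseteq> nbrs G v" using a by (auto simp: nbrs_def)
      hence "card {u,w,w'} \<le> card (nbrs G v)" using finite_nbrs[OF wf] by (intro card_mono) auto
      moreover have "card (nbrs G v) \<le> 2" using m unfolding Mx_def by blast
      ultimately show False by simp
    qed
  qed
  moreover have "(\<lambda>(v,u,w). (v,u)) ` Trip G \<subseteq> darts G" by (auto simp: Trip_def darts_def)
  ultimately show ?thesis using card_inj_on_le finite_darts[OF wf] by metis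
qed

definition oth :: "ugraph \<Rightarrow> nat \<Rightarrow> nat \<Rightarrow> nat" where
  "oth G v u = (SOME w. adj G v w \<and> w \<noteq> u)"

lemma Trip_gt:
  assumes wf: "wf_graph G" and p: "Pg G" shows "card (darts G) < card (Trip G)"
proof -
  have ex: "\<exists>w. adj G v w \<and> w \<noteq> u" if "adj G v u" for v u
  proof -
    have "card (nbrs G v) \<ge> 2" using deg_pos[OF wf that] p Pg_def
      by (metis One_nat_def Suc_1 Suc_leI le_neq_implies_less)
    hence "card (nbrs G v - {u}) \<ge> 1" using that by (simp add: card_Diff_singleton nbrs_def)
    hence "nbrs G v - {u} \<noteq> {}" by (metis card.empty not_one_le_zero)
    then obtain w where "w \<in> nbrs G v - {u}" by blast
    thus ?thesis by (auto simp: nbrs_def)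
  qed
  have oth: "adj G v (oth G v u) \<and> oth G v u \<noteq> u" if "adj G v u" for v u
    unfolding oth_def using someI_ex[OF ex[OF that]] .
  let ?f = "\<lambda>(v,u). (v,u,oth G v u)"
  have inj: "inj_on ?f (darts G)" by (rule inj_onI) auto
  have sub: "?f ` darts G \<subseteq> Trip G"
  proof
    fix t assume "t \<in> ?f ` darts G"
    then obtain v u where "adj G v u" "t = (v,u,oth G v u)" by (auto simp: darts_def)
    thus "t \<in> Trip G" using oth[of v u] by (auto simp: Trip_def)
  qed
  obtain v0 where v0: "card (nbrs G v0) \<ge> 3" using p Pg_def by blast
  obtain a b c where abc: "a \<in> nbrs G v0" "b \<in> nbrs G v0" "c \<in> nbrs G v0" "a \<noteq> b" "b \<noteq> c" "a \<noteq> c"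
  proof -
    have "\<exists>A. A \<subseteq> nbrs G v0 \<and> card A = 3" using v0 by (meson obtain_subset_with_card_n)
    then obtain A where "A \<subseteq> nbrs G v0" "card A = 3" by blast
    thus ?thesis using that by (auto simp: card_3_iff)
  qed
  have ad: "adj G v0 a" "adj G v0 b" "adj G v0 c" using abc by (auto simp: nbrs_def)
  have "(v0,a,b) \<in> Trip G" "(v0,a,c) \<in> Trip G" using ad abc by (auto simp: Trip_def)
  moreover have "(v0,a,b) \<notin> ?f ` darts G \<or> (v0,a,c) \<notin> ?f ` darts G" using abc by auto
  ultimately have "?f ` darts G \<subset> Trip G" using sub by blast
  hence "card (?f ` darts G) < card (Trip G)" using finite_Trip[OF wf] psubset_card_mono by blast
  thus ?thesis using card_image[OF inj] by simp
qed



lemma lg_mono: "edges H \<subseteq> edges G \<Longrightarrow> edges (lg H) \<subseteq> edges (lg G)"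
  unfolding edges_lg by blast

lemma lg_iter_mono: "edges H \<subseteq> edges G \<Longrightarrow> edges ((lg ^^ k) H) \<subseteq> edges ((lg ^^ k) G)"
  by (induction k) (auto simp: lg_mono)

lemma darts_mono: "edges H \<subseteq> edges G \<Longrightarrow> darts H \<subseteq> darts G"
  unfolding darts_def adj_def by blast

lemma card_darts_mono: "wf_graph G \<Longrightarrow> edges H \<subseteq> edges G \<Longrightarrow> card (darts H) \<le> card (darts G)"
  using darts_mono card_mono finite_darts by metis

lemma growth:
  assumes wf: "wf_graph H" and p: "Pg H"
  shows "card (darts ((lg ^^ k) H)) \<ge> card (darts H) + k"
proof (induction k)
  case 0 thus ?case by simp
next
  case (Suc k)
  have w: "wf_graph ((lg ^^ k) H)" using wf_lg_iter[OF wf] .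
  have pk: "Pg ((lg ^^ k) H)"
    by (induction k) (auto simp: p Pg_lg_pres wf_lg_iter[OF wf])
  have "card (darts ((lg ^^ Suc k) H)) = card (Trip ((lg ^^ k) H))"
    using card_darts_lg[OF w] by simp
  moreover have "card (darts ((lg ^^ k) H)) < card (Trip ((lg ^^ k) H))" using Trip_gt[OF w pk] .
  ultimately show ?case using Suc.IH by simp
qed

lemma bounded:
  assumes wf: "wf_graph G" and e: "Ec G"
  shows "card (darts ((lg ^^ k) G)) \<le> max (card (darts G)) (card (darts (lg G)))"
proof -
  have m: "Mx ((lg ^^ Suc k) G)" for k
  proof (induction k)
    case 0 thus ?case using Mx_lg[OF wf e] by simp
  next
    case (Suc k)
    have "wf_graph (lg ((lg ^^ k) G))" using wf_lg_iter[OF wf, of "Suc k"] by simp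
    thus ?case using Mx_lg_pres Suc by simp
  qed
  have "card (darts ((lg ^^ Suc k) G)) \<le> card (darts (lg G))" for k
  proof (induction k)
    case 0 thus ?case by simp
  next
    case (Suc k)
    have w: "wf_graph ((lg ^^ Suc k) G)" using wf_lg_iter[OF wf] .
    have "card (darts ((lg ^^ Suc (Suc k)) G)) = card (Trip ((lg ^^ Suc k) G))"
      using card_darts_lg[OF w] by simp
    also have "\<dots> \<le> card (darts ((lg ^^ Suc k) G))" using Trip_le[OF w m] .
    finally show ?case using Suc.IH by simp
  qed
  thus ?thesis by (cases k) (auto simp: le_max_iff_disj)
qed

lemma lg_edgeI: "e \<in> edges G \<Longrightarrow> f \<in> edges G \<Longrightarrow> e \<noteq> f \<Longrightarrow> x \<in> e \<Longrightarrow> x \<in> f \<Longrightarrow>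
   {set_encode e, set_encode f} \<in> edges (lg G)"
  unfolding edges_lg by blast

(* the paw graph *)
definition paw :: "nat \<Rightarrow> nat \<Rightarrow> nat \<Rightarrow> nat \<Rightarrow> ugraph" where
  "paw z a b c = ({z,a,b,c}, {{z,a},{z,b},{z,c},{a,b}})"

lemma adj_paw: "adj (paw z a b c) x y \<longleftrightarrow> {x,y} \<in> {{z,a},{z,b},{z,c},{a,b}}"
  by (simp add: adj_def paw_def edges_def)

lemma wf_paw:
  assumes "distinct [z,a,b,c]" shows "wf_graph (paw z a b c)"
  using assms unfolding wf_graph_def paw_def verts_def edges_def by auto

lemma nbrs_paw:
  assumes d: "distinct [z,a,b,c]"
  shows "nbrs (paw z a b c) z = {a,b,c}" "nbrs (paw z a b c) a = {z,b}"
        "nbrs (paw z a b c) b = {z,a}" "nbrs (paw z a b c) c = {z}"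
  using d unfolding nbrs_def adj_paw by (auto simp: doubleton_eq_iff)

lemma Sc_paw:
  assumes d: "distinct [z,a,b,c]" shows "Sc (paw z a b c)"
  unfolding Sc_def
proof
  note n = nbrs_paw[OF d]
  have c: "card (nbrs (paw z a b c) z) = 3" "card (nbrs (paw z a b c) a) = 2"
    "card (nbrs (paw z a b c) b) = 2" "card (nbrs (paw z a b c) c) = 1" using d n by auto
  show "\<forall>x y. adj (paw z a b c) x y \<longrightarrow> 4 \<le> card (nbrs (paw z a b c) x) + card (nbrs (paw z a b c) y)"
  proof (intro allI impI)
    fix x y assume "adj (paw z a b c) x y"
    hence "(x = z \<and> y = a) \<or> (x = a \<and> y = z) \<or> (x = z \<and> y = b) \<or> (x = b \<and> y = z) \<or>
           (x = z \<and> y = c) \<or> (x = c \<and> y = z) \<or> (x = a \<and> y = b) \<or> (x = b \<and> y = a)"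
      unfolding adj_paw by (auto simp: doubleton_eq_iff)
    thus "4 \<le> card (nbrs (paw z a b c) x) + card (nbrs (paw z a b c) y)" using c by auto
  qed
  have "adj (paw z a b c) z a" unfolding adj_paw by simp
  thus "\<exists>x y. adj (paw z a b c) x y \<and> 5 \<le> card (nbrs (paw z a b c) x) + card (nbrs (paw z a b c) y)"
    using c by fastforce
qed

lemma Pg_lg_paw: "distinct [z,a,b,c] \<Longrightarrow> Pg (lg (paw z a b c))"
  using Pg_lg wf_paw Sc_paw by blast

lemma wf_lg_paw: "distinct [z,a,b,c] \<Longrightarrow> wf_graph (lg (paw z a b c))"
  using wf_lg wf_paw by blast

lemma paw_sub:
  assumes "{z,a} \<in> E" "{z,b} \<in> E" "{z,c} \<in> E" "{a,b} \<in> E"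
  shows "edges (paw z a b c) \<subseteq> E"
  using assms by (simp add: paw_def edges_def)

(* finding a paw in lg G *)
lemma paw_in_lg:
  assumes wf: "wf_graph G" and v: "adj G v y" "adj G v p" "adj G v q" "distinct [y,p,q]"
    and x: "adj G y x" "x \<noteq> v"
  shows "distinct [set_encode {v,y}, set_encode {v,p}, set_encode {v,q}, set_encode {y,x}]"
    and "edges (paw (set_encode {v,y}) (set_encode {v,p}) (set_encode {v,q}) (set_encode {y,x})) \<subseteq> edges (lg G)"
proof -
  have vn: "v \<noteq> y" "v \<noteq> p" "v \<noteq> q" "y \<noteq> x" using v x wf_adjD[OF wf] by auto
  have ne: "{v,y} \<noteq> {v,p}" "{v,y} \<noteq> {v,q}" "{v,y} \<noteq> {y,x}" "{v,p} \<noteq> {v,q}"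
    "{v,p} \<noteq> {y,x}" "{v,q} \<noteq> {y,x}"
    using vn v(4) x(2) by (auto simp: doubleton_eq_iff)
  show "distinct [set_encode {v,y}, set_encode {v,p}, set_encode {v,q}, set_encode {y,x}]"
    using ne by (simp add: set_encode_eq)
  have e: "{v,y} \<in> edges G" "{v,p} \<in> edges G" "{v,q} \<in> edges G" "{y,x} \<in> edges G"
    using v x adj_edge by auto
  have "{set_encode {v,y}, set_encode {v,p}} \<in> edges (lg G)"
       "{set_encode {v,y}, set_encode {v,q}} \<in> edges (lg G)"
       "{set_encode {v,y}, set_encode {y,x}} \<in> edges (lg G)"
       "{set_encode {v,p}, set_encode {v,q}} \<in> edges (lg G)"
    apply (rule lg_edgeI[OF e(1) e(2) ne(1), of v]; simp)
    apply (rule lg_edgeI[OF e(1) e(3) ne(2), of v]; simp)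
    apply (rule lg_edgeI[OF e(1) e(4) ne(3), of y]; simp)
    apply (rule lg_edgeI[OF e(2) e(3) ne(4), of v]; simp)
    done
  thus "edges (paw (set_encode {v,y}) (set_encode {v,p}) (set_encode {v,q}) (set_encode {y,x})) \<subseteq> edges (lg G)"
    by (rule paw_sub)
qed

lemma paw_in_lg_star:
  assumes wf: "wf_graph G" and v: "adj G v a" "adj G v b" "adj G v c" "adj G v d" "distinct [a,b,c,d]"
  shows "distinct [set_encode {v,a}, set_encode {v,b}, set_encode {v,c}, set_encode {v,d}]"
    and "edges (paw (set_encode {v,a}) (set_encode {v,b}) (set_encode {v,c}) (set_encode {v,d})) \<subseteq> edges (lg G)"
proof -
  have vn: "v \<noteq> a" "v \<noteq> b" "v \<noteq> c" "v \<noteq> d" using v wf_adjD[OF wf] by auto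
  have ne: "{v,a} \<noteq> {v,b}" "{v,a} \<noteq> {v,c}" "{v,a} \<noteq> {v,d}" "{v,b} \<noteq> {v,c}"
    "{v,b} \<noteq> {v,d}" "{v,c} \<noteq> {v,d}"
    using vn v(5) by (auto simp: doubleton_eq_iff)
  show "distinct [set_encode {v,a}, set_encode {v,b}, set_encode {v,c}, set_encode {v,d}]"
    using ne by (simp add: set_encode_eq)
  have e: "{v,a} \<in> edges G" "{v,b} \<in> edges G" "{v,c} \<in> edges G" "{v,d} \<in> edges G"
    using v adj_edge by auto
  have "{set_encode {v,a}, set_encode {v,b}} \<in> edges (lg G)"
       "{set_encode {v,a}, set_encode {v,c}} \<in> edges (lg G)"
       "{set_encode {v,a}, set_encode {v,d}} \<in> edges (lg G)"
       "{set_encode {v,b}, set_encode {v,c}} \<in> edges (lg G)"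
    apply (rule lg_edgeI[OF e(1) e(2) ne(1), of v]; simp)
    apply (rule lg_edgeI[OF e(1) e(3) ne(2), of v]; simp)
    apply (rule lg_edgeI[OF e(1) e(4) ne(3), of v]; simp)
    apply (rule lg_edgeI[OF e(2) e(3) ne(4), of v]; simp)
    done
  thus "edges (paw (set_encode {v,a}) (set_encode {v,b}) (set_encode {v,c}) (set_encode {v,d})) \<subseteq> edges (lg G)"
    by (rule paw_sub)
qed



lemma three_nbrs:
  assumes wf: "wf_graph G" and m: "Mx G" and a: "adj G v p" "adj G v q" "adj G v w" "p \<noteq> q"
  shows "w = p \<or> w = q"
proof (rule ccontr)
  assume "\<not> (w = p \<or> w = q)"
  hence "card {p,q,w} = 3" using a(4) by auto
  moreover have "{p,q,w} \<subseteq> nbrs G v" using a by (auto simp: nbrs_def)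
  hence "card {p,q,w} \<le> card (nbrs G v)" using finite_nbrs[OF wf] by (intro card_mono) auto
  moreover have "card (nbrs G v) \<le> 2" using m unfolding Mx_def by blast
  ultimately show False by simp
qed

definition isp :: "ugraph \<Rightarrow> nat list \<Rightarrow> bool" where
  "isp G xs \<longleftrightarrow> distinct xs \<and> xs \<noteq> [] \<and> set xs \<subseteq> verts G \<and>
     (\<forall>i. Suc i < length xs \<longrightarrow> adj G (xs!i) (xs!Suc i))"

lemma isp_len: "wf_graph G \<Longrightarrow> isp G xs \<Longrightarrow> length xs \<le> card (verts G)"
  unfolding isp_def by (metis card_mono distinct_card wf_finite)

lemma max_path:
  assumes wf: "wf_graph G" and v: "v \<in> verts G"
  obtains xs where "isp G xs" "\<And>ys. isp G ys \<Longrightarrow> length ys \<le> length xs"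
proof -
  have "isp G [v]" using v by (simp add: isp_def)
  hence "\<exists>n. \<exists>xs. isp G xs \<and> length xs = n" by blast
  then obtain n0 where n0: "\<exists>xs. isp G xs \<and> length xs = n0" by blast
  have "\<forall>y. (\<exists>xs. isp G xs \<and> length xs = y) \<longrightarrow> y \<le> card (verts G)"
  proof (intro allI impI)
    fix y assume "\<exists>xs. isp G xs \<and> length xs = y"
    then obtain ys where ys: "isp G ys" "length ys = y" by blast
    show "y \<le> card (verts G)" using isp_len[OF wf ys(1)] ys(2) by simp
  qed
  hence "\<exists>x. (\<exists>xs. isp G xs \<and> length xs = x) \<and> (\<forall>y. (\<exists>xs. isp G xs \<and> length xs = y) \<longrightarrow> y \<le> x)"
    using Nat.ex_has_greatest_nat[of "\<lambda>n. \<exists>xs. isp G xs \<and> length xs = n" n0 "card (verts G)"] n0 by blast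
  then obtain n where n: "\<exists>xs. isp G xs \<and> length xs = n" "\<forall>y. (\<exists>xs. isp G xs \<and> length xs = y) \<longrightarrow> y \<le> n"
    by blast
  then obtain xs where "isp G xs" "length xs = n" by blast
  thus ?thesis using that n(2) by blast
qed

lemma path_or_cycle:
  assumes wf: "wf_graph G" and c: "connected_graph G" and m: "Mx G" and v0: "v0 \<in> verts G"
  shows "is_path_graph G \<or> is_cycle_graph G"
proof -
  obtain xs where xs: "isp G xs" and mx: "\<And>ys. isp G ys \<Longrightarrow> length ys \<le> length xs"
    using max_path[OF wf v0] by blast
  define n where "n = length xs"
  have dist: "distinct xs" and ne: "xs \<noteq> []" and sv: "set xs \<subseteq> verts G"
    and pa: "\<And>i. Suc i < n \<Longrightarrow> adj G (xs!i) (xs!Suc i)"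
    using xs unfolding isp_def n_def by auto
  have n1: "n \<ge> 1" using ne n_def by (cases xs) auto
  have A0: "w \<in> set xs" if "adj G (xs!0) w" for w
  proof (rule ccontr)
    assume nw: "w \<notin> set xs"
    have "isp G (w # xs)" unfolding isp_def
    proof (intro conjI allI impI)
      show "distinct (w # xs)" using nw dist by simp
      show "w # xs \<noteq> []" by simp
      show "set (w # xs) \<subseteq> verts G" using sv wf_adjD[OF wf that] by simp
      fix i assume i: "Suc i < length (w # xs)"
      show "adj G ((w # xs) ! i) ((w # xs) ! Suc i)"
      proof (cases i)
        case 0 thus ?thesis using that adj_sym by simp
      next
        case (Suc k) thus ?thesis using pa i n_def by simp
      qed
    qed
    thus False using mx by fastforce
  qed
  have A1: "w \<in> set xs" if "adj G (xs!(n-1)) w" for w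
  proof (rule ccontr)
    assume nw: "w \<notin> set xs"
    have "isp G (xs @ [w])" unfolding isp_def
    proof (intro conjI allI impI)
      show "distinct (xs @ [w])" using nw dist by simp
      show "xs @ [w] \<noteq> []" by simp
      show "set (xs @ [w]) \<subseteq> verts G" using sv wf_adjD[OF wf that] by simp
      fix i assume i: "Suc i < length (xs @ [w])"
      show "adj G ((xs @ [w]) ! i) ((xs @ [w]) ! Suc i)"
      proof (cases "Suc i < n")
        case True thus ?thesis using pa n_def by (simp add: nth_append)
      next
        case False
        hence "i = n - 1" "Suc i = n" using i n_def by auto
        thus ?thesis using that n_def by (simp add: nth_append)
      qed
    qed
    thus False using mx by fastforce
  qed
  have B: "w = xs!(i-1) \<or> w = xs!Suc i" if "0 < i" "Suc i < n" "adj G (xs!i) w" for i w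
  proof -
    have "Suc (i-1) < n" "Suc (i-1) = i" using that by auto
    hence "adj G (xs!(i-1)) (xs!i)" using pa by metis
    hence a1: "adj G (xs!i) (xs!(i-1))" using that adj_sym by simp
    have a2: "adj G (xs!i) (xs!Suc i)" using pa that by simp
    have "xs!(i-1) \<noteq> xs!Suc i" using dist that n_def by (simp add: nth_eq_iff_index_eq)
    thus ?thesis using three_nbrs[OF wf m a1 a2 that(3)] by blast
  qed
  have C: "z \<in> set xs" if yz: "y \<in> set xs" "adj G y z" for y z
  proof -
    obtain i where i0: "i < length xs" "xs!i = y" using yz(1) by (auto simp: in_set_conv_nth)
    hence i: "i < n" "y = xs!i" using n_def by auto
    show ?thesis
    proof (cases "i = 0")
      case True thus ?thesis using A0 yz i by simp
    next
      case False
      show ?thesis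
      proof (cases "Suc i < n")
        case True
        hence "z = xs!(i-1) \<or> z = xs!Suc i" using B False yz i by simp
        thus ?thesis using True n_def by auto
      next
        case False2: False
        hence "i = n - 1" using i by simp
        thus ?thesis using A1 yz i by simp
      qed
    qed
  qed
  have V: "verts G = set xs"
  proof
    show "set xs \<subseteq> verts G" using sv .
    show "verts G \<subseteq> set xs"
    proof
      fix x assume x: "x \<in> verts G"
      have x0: "xs!0 \<in> set xs" using ne by simp
      hence "xs!0 \<in> verts G" using sv by blast
      hence "(adj G)\<^sup>*\<^sup>* (xs!0) x" using c x connected_graph_def by blast
      thus "x \<in> set xs"
      proof (induction rule: rtranclp_induct)
        case base thus ?case using x0 .
      next
        case (step y z) thus ?case using C by blast
      qed
    qed
  qed
  have D: "j = Suc i \<or> i = Suc j \<or> (i = 0 \<and> j = n - 1) \<or> (j = 0 \<and> i = n - 1)"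
    if "i < n" "j < n" "adj G (xs!i) (xs!j)" for i j
  proof -
    have ij: "i \<noteq> j" using that wf_adjD[OF wf] by auto
    have aji: "adj G (xs!j) (xs!i)" using that adj_sym by metis
    have li: "j' = Suc i' \<or> i' = Suc j'" if "0 < i'" "Suc i' < n" "j' < n" "adj G (xs!i') (xs!j')" for i' j'
    proof -
      have "xs!j' = xs!(i'-1) \<or> xs!j' = xs!Suc i'" using B that by blast
      moreover have "i' - 1 < n" using that by simp
      ultimately have "j' = i' - 1 \<or> j' = Suc i'" using dist that n_def by (simp add: nth_eq_iff_index_eq)
      thus ?thesis using that by auto
    qed
    show ?thesis
    proof (cases "0 < i \<and> Suc i < n")
      case True thus ?thesis using li that by blast
    next
      case False
      hence i: "i = 0 \<or> i = n - 1" using that by auto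
      show ?thesis
      proof (cases "0 < j \<and> Suc j < n")
        case True thus ?thesis using li[of j i] that aji by auto
      next
        case False
        hence "j = 0 \<or> j = n - 1" using that by auto
        thus ?thesis using i ij by auto
      qed
    qed
  qed
  have E: "\<exists>i j. i < n \<and> j < n \<and> e = {xs!i, xs!j} \<and> adj G (xs!i) (xs!j)" if ee: "e \<in> edges G" for e
  proof -
    obtain x y where xy: "e = {x,y}" "adj G x y" using wf_edge_adj[OF wf ee] by metis
    have "x \<in> set xs" "y \<in> set xs" using wf_adjD[OF wf xy(2)] V by auto
    then obtain i j where "i < length xs" "xs!i = x" "j < length xs" "xs!j = y" by (auto simp: in_set_conv_nth)
    thus ?thesis using xy n_def by blast
  qed
  have pe: "{xs!i, xs!Suc i} \<in> edges G" if "Suc i < n" for i using pa[OF that] adj_edge by blast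
  show ?thesis
  proof (cases "3 \<le> n \<and> adj G (xs!0) (xs!(n-1))")
    case True
    have "edges G = {{xs ! i, xs ! ((i + 1) mod length xs)} | i. i < length xs}"
    proof
      show "edges G \<subseteq> {{xs ! i, xs ! ((i + 1) mod length xs)} | i. i < length xs}"
      proof
        fix e assume "e \<in> edges G"
        then obtain i j where ij: "i < n" "j < n" "e = {xs!i, xs!j}" "adj G (xs!i) (xs!j)" using E by blast
        have mm: "(n - 1 + 1) mod n = 0" using n1 by simp
        from D[OF ij(1,2,4)] show "e \<in> {{xs ! i, xs ! ((i + 1) mod length xs)} | i. i < length xs}"
        proof (elim disjE)
          assume "j = Suc i"
          hence "e = {xs ! i, xs ! ((i + 1) mod length xs)}" using ij n_def by simp
          thus ?thesis using ij n_def by blast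
        next
          assume "i = Suc j"
          hence "e = {xs ! j, xs ! ((j + 1) mod length xs)}" using ij n_def by (simp add: insert_commute)
          thus ?thesis using ij n_def by blast
        next
          assume "i = 0 \<and> j = n - 1"
          hence "e = {xs ! (n-1), xs ! ((n - 1 + 1) mod length xs)}" using ij n_def mm by (simp add: insert_commute)
          thus ?thesis using n1 n_def by (intro CollectI exI[of _ "n-1"]) simp
        next
          assume "j = 0 \<and> i = n - 1"
          hence "e = {xs ! (n-1), xs ! ((n - 1 + 1) mod length xs)}" using ij n_def mm by simp
          thus ?thesis using n1 n_def by (intro CollectI exI[of _ "n-1"]) simp
        qed
      qed
      show "{{xs ! i, xs ! ((i + 1) mod length xs)} | i. i < length xs} \<subseteq> edges G"
      proof
        fix e assume "e \<in> {{xs ! i, xs ! ((i + 1) mod length xs)} | i. i < length xs}"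
        then obtain i where i: "i < n" "e = {xs ! i, xs ! ((i + 1) mod n)}" using n_def by blast
        show "e \<in> edges G"
        proof (cases "Suc i < n")
          case True thus ?thesis using pe i by simp
        next
          case False
          hence sn: "Suc i = n" using i by simp
          hence "i = n - 1" "(i + 1) mod n = 0" by auto
          moreover have "adj G (xs!(n-1)) (xs!0)" using True adj_sym by metis
          ultimately show ?thesis using i adj_edge by simp
        qed
      qed
    qed
    moreover have "length xs \<ge> 3" using True n_def by simp
    ultimately have "is_cycle_graph G" unfolding is_cycle_graph_def using dist V by blast
    thus ?thesis by blast
  next
    case False
    have "edges G = {{xs ! i, xs ! (i + 1)} | i. i + 1 < length xs}"
    proof
      show "edges G \<subseteq> {{xs ! i, xs ! (i + 1)} | i. i + 1 < length xs}"
      proof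
        fix e assume "e \<in> edges G"
        then obtain i j where ij: "i < n" "j < n" "e = {xs!i, xs!j}" "adj G (xs!i) (xs!j)" using E by blast
        have ij2: "i \<noteq> j" using ij wf_adjD[OF wf] by auto
        have "j = Suc i \<or> i = Suc j"
        proof -
          have "n < 3" if "(i = 0 \<and> j = n - 1) \<or> (j = 0 \<and> i = n - 1)"
          proof -
            have "adj G (xs!0) (xs!(n-1))" using that ij(4) adj_sym[of G "xs!0" "xs!(n-1)"] by auto
            thus ?thesis using False by simp
          qed
          thus ?thesis using D[OF ij(1,2,4)] ij ij2 by auto
        qed
        thus "e \<in> {{xs ! i, xs ! (i + 1)} | i. i + 1 < length xs}"
        proof
          assume "j = Suc i"
          thus ?thesis using ij n_def by auto
        next
          assume "i = Suc j"
          hence "e = {xs ! j, xs ! (j + 1)}" using ij by (simp add: insert_commute)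
          thus ?thesis using ij n_def \<open>i = Suc j\<close> by auto
        qed
      qed
      show "{{xs ! i, xs ! (i + 1)} | i. i + 1 < length xs} \<subseteq> edges G"
        using pe n_def by auto
    qed
    hence "is_path_graph G" unfolding is_path_graph_def using dist V ne by blast
    thus ?thesis by blast
  qed
qed



lemma card_le2: "S \<subseteq> {p,q} \<Longrightarrow> card S \<le> 2"
proof -
  assume "S \<subseteq> {p,q}"
  hence "card S \<le> card {p,q}" by (intro card_mono) auto
  also have "card {p,q} \<le> 2" by (cases "p = q") auto
  finally show ?thesis .
qed

lemma modpred: "k < n \<Longrightarrow> i < n \<Longrightarrow> Suc i mod n = k \<Longrightarrow> i = (k + n - 1) mod n"
proof -
  assume a: "k < n" "i < n" "Suc i mod n = k"
  show ?thesis
  proof (cases "Suc i < n")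
    case True
    hence "k = Suc i" using a by simp
    hence "k + n - 1 = i + n" by simp
    thus ?thesis using a(2) by simp
  next
    case False
    hence "Suc i = n" using a by simp
    hence "k = 0" using a by simp
    thus ?thesis using \<open>Suc i = n\<close> by simp
  qed
qed

lemma path_Mx:
  assumes wf: "wf_graph G" and p: "is_path_graph G" shows "Mx G"
  unfolding Mx_def
proof
  fix v
  obtain xs where xs: "distinct xs" "verts G = set xs"
    "edges G = {{xs ! i, xs ! (i + 1)} | i. i + 1 < length xs}"
    using p unfolding is_path_graph_def by blast
  show "card (nbrs G v) \<le> 2"
  proof (cases "v \<in> set xs")
    case False
    hence "nbrs G v = {}" using wf_adjD[OF wf] xs(2) unfolding nbrs_def by blast
    thus ?thesis by simp
  next
    case True
    then obtain k where k: "k < length xs" "xs!k = v" by (auto simp: in_set_conv_nth)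
    have "nbrs G v \<subseteq> {xs!(k-1), xs!(k+1)}"
    proof
      fix u assume "u \<in> nbrs G v"
      hence "{v,u} \<in> edges G" by (simp add: nbrs_def adj_def)
      then obtain i where i: "i + 1 < length xs" "{v,u} = {xs ! i, xs ! (i + 1)}" using xs(3) by blast
      hence "(v = xs!i \<and> u = xs!(i+1)) \<or> (v = xs!(i+1) \<and> u = xs!i)" by (auto simp: doubleton_eq_iff)
      thus "u \<in> {xs!(k-1), xs!(k+1)}"
      proof
        assume a: "v = xs!i \<and> u = xs!(i+1)"
        hence "i = k" using k xs(1) i(1) by (simp add: nth_eq_iff_index_eq)
        thus ?thesis using a by simp
      next
        assume a: "v = xs!(i+1) \<and> u = xs!i"
        hence "i + 1 = k" using k xs(1) i(1) by (simp add: nth_eq_iff_index_eq)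
        thus ?thesis using a by auto
      qed
    qed
    thus ?thesis by (rule card_le2)
  qed
qed

lemma cycle_Mx:
  assumes wf: "wf_graph G" and p: "is_cycle_graph G" shows "Mx G"
  unfolding Mx_def
proof
  fix v
  obtain xs where xs: "distinct xs" "length xs \<ge> 3" "verts G = set xs"
    "edges G = {{xs ! i, xs ! ((i + 1) mod length xs)} | i. i < length xs}"
    using p unfolding is_cycle_graph_def by blast
  define n where "n = length xs"
  show "card (nbrs G v) \<le> 2"
  proof (cases "v \<in> set xs")
    case False
    hence "nbrs G v = {}" using wf_adjD[OF wf] xs(3) unfolding nbrs_def by blast
    thus ?thesis by simp
  next
    case True
    then obtain k where k: "k < n" "xs!k = v" by (auto simp: in_set_conv_nth n_def)
    have "nbrs G v \<subseteq> {xs!((k + n - 1) mod n), xs!((k+1) mod n)}"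
    proof
      fix u assume "u \<in> nbrs G v"
      hence "{v,u} \<in> edges G" by (simp add: nbrs_def adj_def)
      then obtain i where i: "i < n" "{v,u} = {xs ! i, xs ! ((i + 1) mod n)}" using xs(4) n_def by blast
      hence "(v = xs!i \<and> u = xs!((i+1) mod n)) \<or> (v = xs!((i+1) mod n) \<and> u = xs!i)" by (auto simp: doubleton_eq_iff)
      thus "u \<in> {xs!((k + n - 1) mod n), xs!((k+1) mod n)}"
      proof
        assume a: "v = xs!i \<and> u = xs!((i+1) mod n)"
        hence "i = k" using k xs(1) i(1) n_def by (simp add: nth_eq_iff_index_eq)
        thus ?thesis using a by simp
      next
        assume a: "v = xs!((i+1) mod n) \<and> u = xs!i"
        have "(i+1) mod n < n" using i(1) by simp
        hence "(i + 1) mod n = k" using a k xs(1) n_def by (simp add: nth_eq_iff_index_eq)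
        hence "i = (k + n - 1) mod n" using modpred[OF k(1) i(1)] by simp
        thus ?thesis using a by simp
      qed
    qed
    thus ?thesis by (rule card_le2)
  qed
qed

lemma K13_Ec:
  assumes wf: "wf_graph G" and k: "is_K13 G" shows "Ec G"
proof -
  obtain c a b d where cabd: "distinct [c, a, b, d]" "verts G = {c, a, b, d}"
      "edges G = {{c, a}, {c, b}, {c, d}}" using k unfolding is_K13_def
    apply (elim exE conjE) apply (rule that) apply assumption+ done
  have adj: "adj G x y \<longleftrightarrow> {x,y} \<in> {{c, a}, {c, b}, {c, d}}" for x y using cabd(3) by (simp add: adj_def)
  have dd: "c \<noteq> a" "c \<noteq> b" "c \<noteq> d" "a \<noteq> b" "a \<noteq> d" "b \<noteq> d" using cabd(1) by auto
  have n1: "nbrs G c = {a,b,d}" unfolding nbrs_def adj using dd by (auto simp: doubleton_eq_iff)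
  have n2: "nbrs G a = {c}" unfolding nbrs_def adj using dd by (auto simp: doubleton_eq_iff)
  have n3: "nbrs G b = {c}" unfolding nbrs_def adj using dd by (auto simp: doubleton_eq_iff)
  have n4: "nbrs G d = {c}" unfolding nbrs_def adj using dd by (auto simp: doubleton_eq_iff)
  note n = n1 n2 n3 n4
  have cn: "card (nbrs G c) = 3" "card (nbrs G a) = 1" "card (nbrs G b) = 1" "card (nbrs G d) = 1"
    using n cabd(1) by auto
  show ?thesis unfolding Ec_def
  proof (intro allI impI)
    fix x y assume "adj G x y"
    hence "(x = c \<and> y = a) \<or> (x = a \<and> y = c) \<or> (x = c \<and> y = b) \<or> (x = b \<and> y = c) \<or>
           (x = c \<and> y = d) \<or> (x = d \<and> y = c)"
      unfolding adj by (auto simp: doubleton_eq_iff)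
    thus "card (nbrs G x) + card (nbrs G y) \<le> 4" using cn by auto
  qed
qed

lemma K13_recog:
  assumes wf: "wf_graph G" and c: "connected_graph G"
    and v: "nbrs G v = {a,b,p}" "distinct [a,b,p]"
    and leaf: "\<And>y x. y \<in> {a,b,p} \<Longrightarrow> adj G y x \<Longrightarrow> x = v"
  shows "is_K13 G"
proof -
  have av: "adj G v a" "adj G v b" "adj G v p" using v(1) by (auto simp: nbrs_def)
  have vn: "v \<noteq> a" "v \<noteq> b" "v \<noteq> p" using av wf_adjD[OF wf] by auto
  have vv: "v \<in> verts G" using wf_adjD[OF wf av(1)] by simp
  have cl: "z \<in> {v,a,b,p}" if "y \<in> {v,a,b,p}" "adj G y z" for y z
  proof (cases "y = v")
    case True thus ?thesis using that v(1) by (auto simp: nbrs_def)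
  next
    case False thus ?thesis using that leaf by auto
  qed
  have V: "verts G = {v,a,b,p}"
  proof
    show "verts G \<subseteq> {v,a,b,p}"
    proof
      fix x assume "x \<in> verts G"
      hence "(adj G)\<^sup>*\<^sup>* v x" using c vv connected_graph_def by blast
      thus "x \<in> {v,a,b,p}"
      proof (induction rule: rtranclp_induct)
        case base thus ?case by simp
      next
        case (step y z) thus ?case using cl by blast
      qed
    qed
    show "{v,a,b,p} \<subseteq> verts G" using av wf_adjD[OF wf] by auto
  qed
  have E: "edges G = {{v,a},{v,b},{v,p}}"
  proof
    show "edges G \<subseteq> {{v,a},{v,b},{v,p}}"
    proof
      fix e assume "e \<in> edges G"
      then obtain x y where xy: "e = {x,y}" "adj G x y" using wf_edge_adj[OF wf] by metis
      have "x \<in> {v,a,b,p}" "y \<in> {v,a,b,p}" using wf_adjD[OF wf xy(2)] V by auto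
      moreover have "adj G y x" using xy(2) adj_sym by metis
      ultimately have "x = v \<or> y = v" using leaf xy(2) by auto
      moreover have "x \<noteq> y" using wf_adjD[OF wf xy(2)] by simp
      ultimately show "e \<in> {{v,a},{v,b},{v,p}}" using xy(1) \<open>x \<in> {v,a,b,p}\<close> \<open>y \<in> {v,a,b,p}\<close>
        by (auto simp: insert_commute)
    qed
    show "{{v,a},{v,b},{v,p}} \<subseteq> edges G" using av adj_edge by auto
  qed
  have "distinct [v,a,b,p]" using vn v(2) by simp
  thus ?thesis unfolding is_K13_def using V E by blast
qed



lemma KBe_Suc: "(KBe ^^ Suc k) X = KBe ((KBe ^^ k) X)"
  by simp

lemma lg_Suc: "(lg ^^ Suc k) X = lg ((lg ^^ k) X)"
  by simp

lemma not_noisolE: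
  assumes "\<not> noisol G"
  obtains a b where "adj G a b" "nbrs G a \<subseteq> {b}" "nbrs G b \<subseteq> {a}"
proof -
  have "\<exists>a b. adj G a b \<and> \<not> ((\<exists>w. w \<noteq> b \<and> adj G a w) \<or> (\<exists>w. w \<noteq> a \<and> adj G b w))"
    using assms unfolding noisol_def by (simp only: not_all not_imp)
  then obtain a b where ab: "adj G a b" "\<not> ((\<exists>w. w \<noteq> b \<and> adj G a w) \<or> (\<exists>w. w \<noteq> a \<and> adj G b w))"
    by (elim exE conjE) (rule that)
  have "nbrs G a \<subseteq> {b}" "nbrs G b \<subseteq> {a}" using ab(2) unfolding nbrs_def by auto
  thus ?thesis using that ab(1) by blast
qed

lemma nodiv:
  assumes wf: "wf_graph G" and c: "connected_graph G" and e: "Ec G"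
  shows "\<not> diverges (burgeon G)"
proof
  define C where "C = max 1 (max (card (darts G)) (card (darts (lg G))))"
  have Q: "giso ((KBe ^^ k) (burgeon G)) (burgeon ((lg ^^ k) G)) \<or> card (verts ((KBe ^^ k) (burgeon G))) \<le> 1" for k
  proof (induction k)
    case 0 thus ?case by (simp add: iso_refl)
  next
    case (Suc k)
    have w1: "wf_graph ((KBe ^^ k) (burgeon G))" using wf_KBe_iter wf_burgeon wf by blast
    have wl: "wf_graph ((lg ^^ k) G)" using wf_lg_iter[OF wf] .
    have w2: "wf_graph (burgeon ((lg ^^ k) G))" using wf_burgeon wl by blast
    from Suc.IH show ?case
    proof
      assume i: "giso ((KBe ^^ k) (burgeon G)) (burgeon ((lg ^^ k) G))"
      have i2: "giso (KBe ((KBe ^^ k) (burgeon G))) (KBe (burgeon ((lg ^^ k) G)))"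
        using KBe_iso[OF w1 w2 i] .
      show ?case
      proof (cases "noisol ((lg ^^ k) G)")
        case True
        have "giso (KBe (burgeon ((lg ^^ k) G))) (burgeon (lg ((lg ^^ k) G)))"
          using KBe_burgeon[OF wl True] .
        thus ?thesis using i2 iso_trans by simp
      next
        case False
        then obtain a b where ab: "adj ((lg ^^ k) G) a b" "nbrs ((lg ^^ k) G) a \<subseteq> {b}" "nbrs ((lg ^^ k) G) b \<subseteq> {a}"
          by (rule not_noisolE)
        have "verts ((lg ^^ k) G) \<subseteq> {a,b}" using isol_all[OF wl conn_lg_iter[OF wf c] ab(1) ab(2) ab(3)] .
        hence "card (edges (burgeon ((lg ^^ k) G))) \<le> 1" using burgeon_K2_edges[OF wl] by blast
        hence "card (verts (KBe (burgeon ((lg ^^ k) G)))) \<le> 1"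
          using KBe_small[OF w2 _ finite_edges[OF w2]] by blast
        hence "card (verts (KBe ((KBe ^^ k) (burgeon G)))) \<le> 1" using iso_card[OF i2] by simp
        thus ?thesis by simp
      qed
    next
      assume "card (verts ((KBe ^^ k) (burgeon G))) \<le> 1"
      hence "edges ((KBe ^^ k) (burgeon G)) = {}" using card_le1_edges[OF w1] by blast
      hence "card (verts (KBe ((KBe ^^ k) (burgeon G)))) \<le> 1"
        using KBe_small[OF w1] by simp
      thus ?case by simp
    qed
  qed
  have bnd: "card (verts ((KBe ^^ k) (burgeon G))) \<le> C" for k
  proof -
    from Q[of k] show ?thesis
    proof
      assume "giso ((KBe ^^ k) (burgeon G)) (burgeon ((lg ^^ k) G))"
      hence "card (verts ((KBe ^^ k) (burgeon G))) = card (darts ((lg ^^ k) G))"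
        using iso_card card_verts_burgeon[OF wf_lg_iter[OF wf]] by simp
      thus ?thesis using bounded[OF wf e, of k] C_def by simp
    next
      assume "card (verts ((KBe ^^ k) (burgeon G))) \<le> 1"
      thus ?thesis using C_def by simp
    qed
  qed
  assume "diverges (burgeon G)"
  hence "\<forall>Z. eventually (\<lambda>k. Z \<le> card (verts ((KBe ^^ k) (burgeon G)))) sequentially"
    unfolding diverges_def filterlim_at_top by blast
  hence "eventually (\<lambda>k. C + 1 \<le> card (verts ((KBe ^^ k) (burgeon G)))) sequentially" by blast
  then obtain N where "\<forall>n\<ge>N. C + 1 \<le> card (verts ((KBe ^^ n) (burgeon G)))"
    unfolding eventually_sequentially by blast
  hence "C + 1 \<le> card (verts ((KBe ^^ N) (burgeon G)))" by blast
  thus False using bnd[of N] by simp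
qed

lemma div:
  assumes wf: "wf_graph G" and c: "connected_graph G"
    and v: "adj G v a" "adj G v b" "adj G v p" "distinct [a,b,p]"
    and pw: "distinct [z,a',b',c']" "edges (paw z a' b' c') \<subseteq> edges (lg G)"
  shows "diverges (burgeon G)"
proof -
  have tri: "tri ((lg ^^ Suc m) G)" for m
  proof (induction m)
    case 0 thus ?case using star_tri[OF wf v(1-3)] v(4) by simp
  next
    case (Suc m)
    thus ?case using tri_lg[OF wf_lg_iter[OF wf]] lg_Suc by metis
  qed
  have ns: "noisol ((lg ^^ m) G)" for m
  proof (cases m)
    case 0
    have "a \<noteq> b" using v(4) by simp
    thus ?thesis using noisol_conn[OF wf c v(1) v(2)] 0 by simp
  next
    case (Suc m')
    thus ?thesis using tri_noisol[OF wf_lg_iter[OF wf] conn_lg_iter[OF wf c] tri] by simp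
  qed
  have eq: "card (verts ((KBe ^^ k) (burgeon G))) = card (darts ((lg ^^ k) G))" for k
    using iter_iso[OF wf, of k] ns iso_card card_verts_burgeon[OF wf_lg_iter[OF wf]] by simp
  let ?H = "lg (paw z a' b' c')"
  have wH: "wf_graph ?H" using wf_lg_paw[OF pw(1)] .
  have pH: "Pg ?H" using Pg_lg_paw[OF pw(1)] .
  have sub: "edges ?H \<subseteq> edges ((lg ^^ 2) G)" using lg_mono[OF pw(2)] by (simp add: numeral_2_eq_2)
  have ge: "card (darts ((lg ^^ (k + 2)) G)) \<ge> k" for k
  proof -
    have "edges ((lg ^^ k) ?H) \<subseteq> edges ((lg ^^ k) ((lg ^^ 2) G))" using lg_iter_mono[OF sub] .
    also have "(lg ^^ k) ((lg ^^ 2) G) = (lg ^^ (k + 2)) G" by (simp only: funpow_add o_apply)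
    finally have "card (darts ((lg ^^ k) ?H)) \<le> card (darts ((lg ^^ (k + 2)) G))"
      using card_darts_mono[OF wf_lg_iter[OF wf]] by blast
    moreover have "card (darts ((lg ^^ k) ?H)) \<ge> card (darts ?H) + k" using growth[OF wH pH] .
    ultimately show ?thesis by simp
  qed
  show ?thesis unfolding diverges_def filterlim_at_top
  proof
    fix Z :: nat
    show "eventually (\<lambda>k. Z \<le> card (verts ((KBe ^^ k) (burgeon G)))) sequentially"
      unfolding eventually_sequentially
    proof (intro exI allI impI)
      fix n assume "Z + 2 \<le> n"
      hence "n = (n - 2) + 2" by simp
      hence "card (darts ((lg ^^ n) G)) \<ge> n - 2" using ge[of "n-2"] by metis
      thus "Z \<le> card (verts ((KBe ^^ n) (burgeon G)))" using eq \<open>Z + 2 \<le> n\<close> by simp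
    qed
  qed
qed



theorem mainTheorem14:
  fixes G :: ugraph
  assumes "wf_graph G" and "connected_graph G" and "edges G \<noteq> {}"
  shows "diverges (burgeon G) \<longleftrightarrow>
           \<not> is_cycle_graph G \<and> \<not> is_path_graph G \<and> \<not> is_K13 G"
proof
  note wf = assms(1) and c = assms(2)
  assume d: "diverges (burgeon G)"
  show "\<not> is_cycle_graph G \<and> \<not> is_path_graph G \<and> \<not> is_K13 G"
  proof (intro conjI notI)
    assume "is_cycle_graph G"
    hence "Ec G" using cycle_Mx[OF wf] Mx_Ec by blast
    thus False using nodiv[OF wf c] d by blast
  next
    assume "is_path_graph G"
    hence "Ec G" using path_Mx[OF wf] Mx_Ec by blast
    thus False using nodiv[OF wf c] d by blast
  next
    assume "is_K13 G"
    hence "Ec G" using K13_Ec[OF wf] by blast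
    thus False using nodiv[OF wf c] d by blast
  qed
next
  note wf = assms(1) and c = assms(2)
  assume n: "\<not> is_cycle_graph G \<and> \<not> is_path_graph G \<and> \<not> is_K13 G"
  obtain e where "e \<in> edges G" using assms(3) by blast
  then obtain x y where "adj G x y" using wf_edge_adj[OF wf] by metis
  hence v0: "x \<in> verts G" using wf_adjD[OF wf] by blast
  have "\<not> Mx G"
  proof
    assume "Mx G"
    thus False using path_or_cycle[OF wf c _ v0] n by blast
  qed
  then obtain v where "\<not> card (nbrs G v) \<le> 2" unfolding Mx_def by blast
  hence v3: "card (nbrs G v) \<ge> 3" by simp
  obtain A where A: "A \<subseteq> nbrs G v" "card A = 3" using obtain_subset_with_card_n[OF v3] by blast
  then obtain a b p where abp: "A = {a,b,p}" "a \<noteq> b" "b \<noteq> p" "a \<noteq> p" by (auto simp: card_3_iff)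
  have av: "adj G v a" "adj G v b" "adj G v p" using A abp by (auto simp: nbrs_def)
  have dabp: "distinct [a,b,p]" using abp by simp
  show "diverges (burgeon G)"
  proof (cases "\<exists>d. adj G v d \<and> d \<notin> {a,b,p}")
    case True
    then obtain d where dd: "adj G v d" "d \<notin> {a,b,p}" by blast
    have "distinct [a,b,p,d]" using dd dabp by simp
    thus ?thesis using paw_in_lg_star[OF wf av dd(1)] div[OF wf c av dabp] by blast
  next
    case False
    hence nv: "nbrs G v = {a,b,p}" using av by (auto simp: nbrs_def)
    show ?thesis
    proof (cases "\<exists>y x. y \<in> {a,b,p} \<and> adj G y x \<and> x \<noteq> v")
      case True
      then obtain y x where yx: "y \<in> {a,b,p}" "adj G y x" "x \<noteq> v" by blast
      from yx(1) consider "y = a" | "y = b" | "y = p" by blast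
      thus ?thesis
      proof cases
        case 1
        have "distinct [a,b,p]" using dabp by simp
        thus ?thesis using paw_in_lg[OF wf av(1) av(2) av(3) _ _ yx(3)] yx(2) 1 div[OF wf c av dabp] by blast
      next
        case 2
        have dd: "distinct [b,a,p]" using dabp by auto
        thus ?thesis using paw_in_lg[OF wf av(2) av(1) av(3) dd _ yx(3)] yx(2) 2 div[OF wf c av dabp] by blast
      next
        case 3
        have dd: "distinct [p,a,b]" using dabp by auto
        thus ?thesis using paw_in_lg[OF wf av(3) av(1) av(2) dd _ yx(3)] yx(2) 3 div[OF wf c av dabp] by blast
      qed
    next
      case False
      hence "\<And>y x. y \<in> {a,b,p} \<Longrightarrow> adj G y x \<Longrightarrow> x = v" by blast
      hence "is_K13 G" using K13_recog[OF wf c nv dabp] by blast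
      thus ?thesis using n by blast
    qed
  qed
qed


end
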